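(* Let $r\geq q\geq p\geq2$ and $s\geq-\frac{2\alpha}{q}+\frac12-\frac1p$, where $\alpha>0$. For $f\in\mathcal H^s(\mathbb T^3)$, the free evolution $B_{f^\omega}=e^{-t(-\Delta)^\alpha}f^\omega$ satisfies $$\|B_{f^\omega}\|_{L^r_\omega L^q_tL^p_x}\lesssim\sqrt r\,\|f\|_{\mathcal H^s_x},$$ with implicit constant independent of $r$ and $f$.
   Context: $\mathcal H^s(\mathbb T^3)$ has norm $\|f\|_{\mathcal H^s}^2=\sum_{k\in\mathbb Z^3}(1+|k|^2)^s|a_k|^2$ where $f=\sum_ka_ke^{ik\cdot x}$, $a_k\in\mathbb C^3$. $(\Omega,\mathcal A,P)$ is a probability space and $(l_k(\omega))_{k\in\mathbb Z^3}$ are real-valued, zero-mean, independent random variables with distributions $\mu_k$ satisfying $\left|\int_{\mathbb R}e^{\gamma x}d\mu_k(x)\right|\le e^{c\gamma^2}$ for all $\gamma\in\mathbb R$, all $k$, for some $c>0$. The randomization is $f^\omega=\sum_kl_k(\omega)a_ke^{ik\cdot x}$ (componentwise) and $e^{-t(-\Delta)^\alpha}f^\omega=\sum_ke^{-t|k|^{2\alpha}}l_k(\omega)a_ke^{ik\cdot x}$. The norm $\|F\|_{L^r_\omega L^q_tL^p_x}=\big(\mathbb E\,\|F\|_{L^q(0,T;L^p(\mathbb T^3))}^r\big)^{1/r}$ for a time interval $(0,T)$. *)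

theory Defs
  imports "HOL-Analysis.Analysis" "HOL-Probability.Probability"
begin

text \<open>Real power on extended nonnegative reals (for positive exponent): infinity stays infinity.\<close>
definition epowr :: "ennreal \<Rightarrow> real \<Rightarrow> ennreal" where
  "epowr y e = (if y = \<infinity> then \<infinity> else ennreal (enn2real y powr e))"

definition knorm2 :: "int^3 \<Rightarrow> real" where
  "knorm2 k = (\<Sum>i\<in>UNIV. (real_of_int (k$i))^2)"

definition kdot :: "int^3 \<Rightarrow> real^3 \<Rightarrow> real" where
  "kdot k x = (\<Sum>i\<in>UNIV. real_of_int (k$i) * x$i)"

text \<open>Fundamental domain of the torus T^3 = [0,2 pi]^3.\<close>
definition torus :: "(real^3) set" where
  "torus = {x. \<forall>i. 0 \<le> x$i \<and> x$i \<le> 2*pi}"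

text \<open>f = sum_k a_k e^{ik.x} belongs to H^s.\<close>
definition in_Hs :: "real \<Rightarrow> (int^3 \<Rightarrow> complex^3) \<Rightarrow> bool" where
  "in_Hs s a \<longleftrightarrow> (\<lambda>k. (1 + knorm2 k) powr s * (norm (a k))^2) summable_on UNIV"

definition Hs_norm :: "real \<Rightarrow> (int^3 \<Rightarrow> complex^3) \<Rightarrow> real" where
  "Hs_norm s a = sqrt (\<Sum>\<^sub>\<infinity>k. (1 + knorm2 k) powr s * (norm (a k))^2)"

text \<open>Randomized free evolution e^{-t(-Delta)^alpha} f^omega evaluated at (omega,t,x).\<close>
definition free_evol :: "real \<Rightarrow> (int^3 \<Rightarrow> 'w \<Rightarrow> real) \<Rightarrow> (int^3 \<Rightarrow> complex^3)
    \<Rightarrow> 'w \<Rightarrow> real \<Rightarrow> real^3 \<Rightarrow> complex^3" where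
  "free_evol \<alpha> l a \<omega> t x =
     (\<Sum>\<^sub>\<infinity>k. (complex_of_real (exp (- t * (knorm2 k) powr \<alpha>) * l k \<omega>)
              * cis (kdot k x)) *s a k)"

text \<open>Mixed norm ||F||_{L^r_omega L^q_t L^p_x} on (0,T) x T^3.\<close>
definition mixed_norm :: "'w measure \<Rightarrow> real \<Rightarrow> real \<Rightarrow> real \<Rightarrow> real
    \<Rightarrow> ('w \<Rightarrow> real \<Rightarrow> real^3 \<Rightarrow> complex^3) \<Rightarrow> ennreal" where
  "mixed_norm M r q p T F =
     epowr (\<integral>\<^sup>+\<omega>. epowr (\<integral>\<^sup>+t\<in>{0<..<T}.
                epowr (\<integral>\<^sup>+x\<in>torus. ennreal (norm (F \<omega> t x) powr p) \<partial>lborel) (q/p)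
              \<partial>lborel) (r/q) \<partial>M) (1/r)"

end

theory Submission
  imports Defs
begin

lemma epowr_ennreal: "0 \<le> y \<Longrightarrow> epowr (ennreal y) e = ennreal (y powr e)"
  by (simp add: epowr_def)

lemma epowr_top[simp]: "epowr top e = top"
  by (simp add: epowr_def)

lemma epowr_zero[simp]: "epowr 0 e = 0"
  by (simp add: epowr_def)

lemma epowr_one[simp]: "epowr y 1 = y"
  by (cases y) (auto simp: epowr_def)

lemma epowr_mono: assumes "x \<le> y" "e > 0" shows "epowr x e \<le> epowr y e"
proof (cases y)
  case (real b)
  then obtain a where "x = ennreal a" "a \<ge> 0" using assms
    by (metis ennreal_cases ennreal_less_top linorder_not_le top.extremum_unique)
  then show ?thesis using real assms
    by (auto simp: epowr_def ennreal_le_iff2 intro!: ennreal_leI powr_mono2)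
next
  case top then show ?thesis by simp
qed

lemma epowr_mult: assumes "e > 0" shows "epowr (x * y) e = epowr x e * epowr y e"
proof (cases x; cases y)
  fix a b assume a: "x = ennreal a" "0 \<le> a" and b: "y = ennreal b" "0 \<le> b"
  then show ?thesis by (simp add: epowr_ennreal powr_mult ennreal_mult flip: ennreal_mult)
next
  fix a assume a: "x = ennreal a" "0 \<le> a" and "y = top"
  then show ?thesis using assms
    by (cases "a = 0") (auto simp: epowr_ennreal ennreal_mult_top)
next
  fix b assume "x = top" and b: "y = ennreal b" "0 \<le> b"
  then show ?thesis using assms
    by (cases "b = 0") (auto simp: epowr_ennreal ennreal_top_mult)
next
  assume "x = top" "y = top" then show ?thesis by simp
qed

lemma epowr_epowr: assumes "e1 > 0" shows "epowr (epowr x e1) e2 = epowr x (e1 * e2)"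
  by (cases x) (auto simp: epowr_ennreal powr_powr)

lemma epowr_eq_0_iff: assumes "e > 0" shows "epowr x e = 0 \<longleftrightarrow> x = 0"
  by (cases x) (auto simp: epowr_ennreal)

lemma epowr_eq_top_iff: assumes "e > 0" shows "epowr x e = \<infinity> \<longleftrightarrow> x = \<infinity>"
  by (cases x) (auto simp: epowr_ennreal)

lemma measurable_epowr[measurable]:
  assumes [measurable]: "f \<in> borel_measurable M"
  shows "(\<lambda>x. epowr (f x) e) \<in> borel_measurable M"
  unfolding epowr_def by measurable

lemma tangent_powr:
  fixes Q lam y :: real
  assumes "0 < Q" "Q < 1" "lam > 0" "y \<ge> 0"
  shows "y powr Q \<le> (1 - Q) * lam powr Q + Q * lam powr (Q - 1) * y"
proof (cases "y = 0")
  case True then show ?thesis using assms by simp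
next
  case False
  then have "y > 0" using assms by simp
  have "y powr Q * lam powr (1 - Q) \<le> Q * y + (1 - Q) * lam"
    using Youngs_inequality_0[of Q "1 - Q" y lam] assms \<open>y > 0\<close> by simp
  then have "y powr Q * lam powr (1 - Q) * lam powr (Q - 1) \<le> (Q * y + (1 - Q) * lam) * lam powr (Q - 1)"
    by (rule mult_right_mono) simp
  moreover have "lam powr (1 - Q) * lam powr (Q - 1) = 1"
    using assms by (simp add: powr_add[symmetric])
  moreover have "lam * lam powr (Q - 1) = lam powr Q"
    using assms by (simp add: powr_add[symmetric] powr_mult_base)
  ultimately show ?thesis
    by (simp add: algebra_simps)
qed

lemma pointwise_tangent:
  fixes Q lam u :: real and J :: ennreal
  assumes Q: "0 < Q" "Q < 1" and lam: "lam > 0" and u: "u \<ge> 0" and uJ: "u = 0 \<Longrightarrow> J = 0"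
  shows "epowr J Q \<le> ennreal ((1 - Q) * lam powr Q * u) + ennreal (Q * lam powr (Q - 1)) * (ennreal (u powr (1 - 1/Q)) * J)"
proof (cases "u = 0")
  case True then show ?thesis using uJ by simp
next
  case False
  then have upos: "u > 0" using u by simp
  show ?thesis
  proof (cases J)
    case top
    have "ennreal (Q * lam powr (Q - 1)) * (ennreal (u powr (1 - 1/Q)) * J) = top"
      using top upos Q lam by (simp add: ennreal_mult_top ennreal_top_mult)
    then show ?thesis by simp
  next
    case (real j)
    define y where "y = j * u powr (- (1/Q))"
    have y0: "y \<ge> 0" using real by (simp add: y_def)
    have t: "y powr Q \<le> (1 - Q) * lam powr Q + Q * lam powr (Q - 1) * y"
      by (rule tangent_powr[OF Q lam y0])
    have e1: "(u powr (- (1/Q))) powr Q = inverse u"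
    proof -
      have "(u powr (- (1/Q))) powr Q = u powr (-1)"
        using Q upos by (simp add: powr_powr)
      then show ?thesis using upos by (simp add: powr_minus)
    qed
    have "y powr Q = j powr Q * (u powr (- (1/Q))) powr Q"
      using real upos by (simp add: y_def powr_mult)
    then have A: "u * y powr Q = j powr Q"
      using upos by (simp add: e1)
    have e2: "u powr (1 - 1/Q) = u * u powr (- (1/Q))"
      using upos powr_add[of u 1 "-1/Q"] by simp
    have B: "u * y = u powr (1 - 1/Q) * j"
      unfolding e2 y_def by simp
    have "u * y powr Q \<le> u * ((1 - Q) * lam powr Q + Q * lam powr (Q - 1) * y)"
      using mult_left_mono[OF t u] .
    also have "\<dots> = (1 - Q) * lam powr Q * u + Q * lam powr (Q - 1) * (u * y)"
      by (simp add: algebra_simps)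
    finally have C: "j powr Q \<le> (1 - Q) * lam powr Q * u + Q * lam powr (Q - 1) * (u powr (1 - 1/Q) * j)"
      unfolding A B .
    have p1: "0 \<le> (1 - Q) * lam powr Q * u" and p2: "0 \<le> Q * lam powr (Q - 1)" and p3: "0 \<le> u powr (1 - 1/Q)"
      using Q lam upos real by auto
    have "ennreal ((1 - Q) * lam powr Q * u) + ennreal (Q * lam powr (Q - 1)) * (ennreal (u powr (1 - 1/Q)) * J)
        = ennreal ((1 - Q) * lam powr Q * u + Q * lam powr (Q - 1) * (u powr (1 - 1/Q) * j))"
      using p1 p2 p3 real by (simp add: ennreal_mult ennreal_plus)
    moreover have "epowr J Q = ennreal (j powr Q)"
      using real by (simp add: epowr_ennreal)
    ultimately show ?thesis using C by (simp add: ennreal_leI)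
  qed
qed

lemma weighted_jensen:
  fixes u :: "'a \<Rightarrow> real" and J :: "'a \<Rightarrow> ennreal"
  assumes [measurable]: "u \<in> borel_measurable M" "J \<in> borel_measurable M"
    and u0: "\<And>x. 0 \<le> u x" and uJ: "\<And>x. u x = 0 \<Longrightarrow> J x = 0"
    and U: "(\<integral>\<^sup>+x. ennreal (u x) \<partial>M) = ennreal U" and Upos: "U > 0"
    and Q: "0 < Q" "Q \<le> 1"
  shows "(\<integral>\<^sup>+x. epowr (J x) Q \<partial>M) \<le> ennreal (U powr (1-Q)) * epowr (\<integral>\<^sup>+x. ennreal (u x powr (1 - 1/Q)) * J x \<partial>M) Q"
proof (cases "Q = 1")
  case True
  have "ennreal (u x powr (1 - 1/Q)) * J x = J x" for x
    using True uJ[of x] u0[of x] by (cases "u x = 0") auto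
  then show ?thesis using True Upos by simp
next
  case False
  then have Q1: "Q < 1" using Q by simp
  define G where "G = (\<integral>\<^sup>+x. ennreal (u x powr (1 - 1/Q)) * J x \<partial>M)"
  show ?thesis
  proof (cases G)
    case top
    then show ?thesis using Upos Q unfolding G_def[symmetric]
      by (simp add: ennreal_mult_top)
  next
    case (real g)
    show ?thesis
    proof (cases "g = 0")
      case True
      then have "AE x in M. ennreal (u x powr (1 - 1/Q)) * J x = 0"
      proof -
        have "(\<integral>\<^sup>+x. ennreal (u x powr (1 - 1/Q)) * J x \<partial>M) = 0"
          using real True unfolding G_def by simp
        then show ?thesis by (subst (asm) nn_integral_0_iff_AE) auto
      qed
      then have "AE x in M. J x = 0"
      proof eventually_elim
        case (elim x)
        then show ?case using uJ[of x] u0[of x] by (cases "u x = 0") auto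
      qed
      then have "(\<integral>\<^sup>+x. epowr (J x) Q \<partial>M) = (\<integral>\<^sup>+x. 0 \<partial>M)"
        by (intro nn_integral_cong_AE) auto
      then show ?thesis by simp
    next
      case False
      then have gpos: "g > 0" using real by simp
      define lam where "lam = g / U"
      have lam: "lam > 0" using gpos Upos by (simp add: lam_def)
      have "(\<integral>\<^sup>+x. epowr (J x) Q \<partial>M) \<le>
          (\<integral>\<^sup>+x. ennreal ((1 - Q) * lam powr Q) * ennreal (u x) + ennreal (Q * lam powr (Q - 1)) * (ennreal (u x powr (1 - 1/Q)) * J x) \<partial>M)"
      proof (intro nn_integral_mono)
        fix x
        have "epowr (J x) Q \<le> ennreal ((1 - Q) * lam powr Q * u x) + ennreal (Q * lam powr (Q - 1)) * (ennreal (u x powr (1 - 1/Q)) * J x)"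
          by (rule pointwise_tangent[OF Q(1) Q1 lam u0 uJ])
        also have "ennreal ((1 - Q) * lam powr Q * u x) = ennreal ((1 - Q) * lam powr Q) * ennreal (u x)"
          using Q1 u0[of x] by (simp add: ennreal_mult)
        finally show "epowr (J x) Q \<le> ennreal ((1 - Q) * lam powr Q) * ennreal (u x) + ennreal (Q * lam powr (Q - 1)) * (ennreal (u x powr (1 - 1/Q)) * J x)" .
      qed
      also have "\<dots> = ennreal ((1 - Q) * lam powr Q) * ennreal U + ennreal (Q * lam powr (Q - 1)) * ennreal g"
        by (subst nn_integral_add) (auto simp: nn_integral_cmult U G_def[symmetric] real)
      also have "\<dots> = ennreal ((1 - Q) * lam powr Q * U + Q * lam powr (Q - 1) * g)"
      proof -
        have pa: "0 \<le> (1 - Q) * lam powr Q" and pb: "0 \<le> Q * lam powr (Q - 1)" using Q1 Q by auto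
        have "ennreal ((1 - Q) * lam powr Q * U + Q * lam powr (Q - 1) * g)
            = ennreal ((1 - Q) * lam powr Q * U) + ennreal (Q * lam powr (Q - 1) * g)"
          by (rule ennreal_plus) (use pa pb Upos gpos in auto)
        also have "\<dots> = ennreal ((1 - Q) * lam powr Q) * ennreal U + ennreal (Q * lam powr (Q - 1)) * ennreal g"
          using pa pb Upos gpos by (simp add: ennreal_mult)
        finally show ?thesis by simp
      qed
      also have "(1 - Q) * lam powr Q * U + Q * lam powr (Q - 1) * g = U powr (1 - Q) * g powr Q"
      proof -
        have a: "lam powr Q * U = U powr (1 - Q) * g powr Q"
          using Upos gpos by (simp add: lam_def powr_divide powr_diff field_simps)
        have b: "lam powr (Q - 1) * g = U powr (1 - Q) * g powr Q"
          using Upos gpos by (simp add: lam_def powr_divide powr_diff field_simps)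
        show ?thesis
          by (metis (no_types, lifting) a b mult.assoc mult.commute ring_class.ring_distribs(2) diff_add_cancel mult_1)
      qed
      also have "ennreal (U powr (1 - Q) * g powr Q) = ennreal (U powr (1-Q)) * epowr G Q"
        using real gpos by (simp add: epowr_ennreal ennreal_mult)
      finally show ?thesis unfolding G_def .
    qed
  qed
qed

lemma mgf_finite_sum:
  fixes M :: "'w measure" and l :: "int^3 \<Rightarrow> 'w \<Rightarrow> real"
  assumes P: "prob_space M" and meas: "\<And>k. l k \<in> borel_measurable M"
    and ind: "prob_space.indep_vars M (\<lambda>_. borel) l UNIV"
    and sg: "\<And>k \<gamma>. (\<integral>\<^sup>+\<omega>. ennreal (exp (\<gamma> * l k \<omega>)) \<partial>M) \<le> ennreal (exp (c * \<gamma>^2))"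
    and K: "finite K"
  shows "(\<integral>\<^sup>+\<omega>. ennreal (exp (\<gamma> * (\<Sum>k\<in>K. \<beta> k * l k \<omega>))) \<partial>M) \<le> ennreal (exp (c * \<gamma>^2 * (\<Sum>k\<in>K. (\<beta> k)^2)))"
proof -
  interpret prob_space M by (rule P)
  define X where "X k \<omega> = ennreal (exp (\<gamma> * \<beta> k * l k \<omega>))" for k \<omega>
  have indX: "indep_vars (\<lambda>_. borel) X K"
  proof -
    have "indep_vars (\<lambda>_. borel) (\<lambda>k x. (\<lambda>y. ennreal (exp (\<gamma> * \<beta> k * y))) (l k x)) K"
      by (rule indep_vars_compose2[OF indep_vars_subset[OF ind]]) auto
    moreover have "X = (\<lambda>k x. ennreal (exp (\<gamma> * \<beta> k * l k x)))"
      by (intro ext) (simp add: X_def)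
    ultimately show ?thesis by simp
  qed
  have "(\<integral>\<^sup>+\<omega>. ennreal (exp (\<gamma> * (\<Sum>k\<in>K. \<beta> k * l k \<omega>))) \<partial>M) = (\<integral>\<^sup>+\<omega>. (\<Prod>k\<in>K. X k \<omega>) \<partial>M)"
    by (intro nn_integral_cong) (simp add: X_def prod_ennreal exp_sum[OF K, symmetric] sum_distrib_left mult.assoc)
  also have "\<dots> = (\<Prod>k\<in>K. \<integral>\<^sup>+\<omega>. X k \<omega> \<partial>M)"
    by (rule indep_vars_nn_integral[OF K indX]) simp
  also have "\<dots> \<le> (\<Prod>k\<in>K. ennreal (exp (c * (\<gamma> * \<beta> k)^2)))"
  proof (rule prod_mono_ennreal)
    fix k assume "k \<in> K"
    show "(\<integral>\<^sup>+\<omega>. X k \<omega> \<partial>M) \<le> ennreal (exp (c * (\<gamma> * \<beta> k)^2))"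
      using sg[of "\<gamma> * \<beta> k" k] by (simp add: X_def)
  qed
  also have "\<dots> = ennreal (exp (c * \<gamma>^2 * (\<Sum>k\<in>K. (\<beta> k)^2)))"
    by (simp add: prod_ennreal exp_sum[OF K, symmetric] sum_distrib_left power_mult_distrib mult_ac)
  finally show ?thesis .
qed

lemma powr_le_exp_bound:
  fixes x g r :: real
  assumes "x \<ge> 0" "g > 0" "r > 0"
  shows "x powr r \<le> (r / g) powr r * exp (- r) * exp (g * x)"
proof -
  define y where "y = g * x / r"
  have y0: "y \<ge> 0" using assms by (simp add: y_def)
  have "y \<le> exp (y - 1)" using exp_ge_add_one_self[of "y - 1"] by simp
  then have "y powr r \<le> exp (y - 1) powr r" using y0 assms by (intro powr_mono2) auto
  also have "exp (y - 1) powr r = exp (- r) * exp (g * x)"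
    using assms by (simp add: powr_def y_def exp_add[symmetric] algebra_simps)
  finally have *: "y powr r \<le> exp (- r) * exp (g * x)" .
  have "x = (r / g) * y" using assms by (simp add: y_def)
  then have "x powr r = (r / g) powr r * y powr r"
    using assms y0 powr_mult[of "r / g" y r] by (simp only:)
  also have "\<dots> \<le> (r / g) powr r * (exp (- r) * exp (g * x))"
    using * assms by (intro mult_left_mono) auto
  finally show ?thesis by (simp add: mult_ac)
qed

definition comp :: "3 \<times> bool \<Rightarrow> complex^3 \<Rightarrow> real" where
  "comp i v = (if snd i then Re (v $ fst i) else Im (v $ fst i))"

lemma sum_3bool: "(\<Sum>i\<in>(UNIV :: (3 \<times> bool) set). f i) = (\<Sum>j\<in>UNIV. f (j, True) + f (j, False))"
proof -
  have "(\<Sum>j\<in>UNIV. \<Sum>b\<in>UNIV. f (j, b)) = (\<Sum>(j,b)\<in>(UNIV :: 3 set) \<times> (UNIV :: bool set). f (j, b))"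
    by (rule sum.cartesian_product)
  then have "(\<Sum>i\<in>(UNIV :: (3 \<times> bool) set). f i) = (\<Sum>j\<in>UNIV. \<Sum>b\<in>UNIV. f (j, b))"
    by (simp only: UNIV_Times_UNIV case_prod_eta)
  also have "\<dots> = (\<Sum>j\<in>UNIV. f (j, True) + f (j, False))"
    by (simp add: UNIV_bool add.commute)
  finally show ?thesis .
qed

lemma norm_le_comp: "norm (v :: complex^3) \<le> (\<Sum>i\<in>UNIV. \<bar>comp i v\<bar>)"
proof -
  have "norm v \<le> (\<Sum>j\<in>UNIV. norm (v $ j))"
    unfolding norm_vec_def by (rule L2_set_le_sum) simp
  also have "\<dots> \<le> (\<Sum>j\<in>UNIV. \<bar>Re (v $ j)\<bar> + \<bar>Im (v $ j)\<bar>)"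
    by (intro sum_mono cmod_le)
  also have "\<dots> = (\<Sum>i\<in>UNIV. \<bar>comp i v\<bar>)"
    by (simp add: sum_3bool comp_def)
  finally show ?thesis .
qed

lemma comp_le_norm: "\<bar>comp i (v :: complex^3)\<bar> \<le> norm v"
proof -
  have "\<bar>comp i v\<bar> \<le> cmod (v $ fst i)"
    by (simp add: comp_def abs_Re_le_cmod abs_Im_le_cmod)
  also have "\<dots> \<le> norm v" by (rule Finite_Cartesian_Product.norm_nth_le)
  finally show ?thesis .
qed

lemma comp_sum: "comp i (\<Sum>k\<in>K. complex_of_real (x k) *s c k) = (\<Sum>k\<in>K. comp i (c k) * x k)"
  by (simp add: comp_def sum_component vector_scalar_mult_def Re_sum Im_sum mult.commute)

lemma card_3bool: "card (UNIV :: (3 \<times> bool) set) = 6"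
proof -
  have "card (UNIV :: (3 \<times> bool) set) = card ((UNIV :: 3 set) \<times> (UNIV :: bool set))"
    by (simp only: UNIV_Times_UNIV)
  also have "\<dots> = 6" by (simp only: card_cartesian_product card_UNIV_bool) simp
  finally show ?thesis .
qed

lemma exp_sum_abs_le:
  fixes Y :: "3 \<times> bool \<Rightarrow> real" and g :: real
  assumes "g \<ge> 0"
  shows "exp (g * (\<Sum>i\<in>UNIV. \<bar>Y i\<bar>)) \<le> (\<Sum>i\<in>UNIV. exp ((6 * g) * Y i) + exp ((- 6 * g) * Y i))"
proof -
  define m where "m = Max (range (\<lambda>i. \<bar>Y i\<bar>))"
  have "m \<in> range (\<lambda>i. \<bar>Y i\<bar>)" unfolding m_def by (intro Max_in) auto
  then obtain i0 where i0: "m = \<bar>Y i0\<bar>" by auto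
  have le: "\<bar>Y i\<bar> \<le> m" for i unfolding m_def by (intro Max_ge) auto
  have "(\<Sum>i\<in>UNIV. \<bar>Y i\<bar>) \<le> of_nat (card (UNIV :: (3 \<times> bool) set)) * m"
    by (rule sum_bounded_above) (use le in auto)
  then have "(\<Sum>i\<in>UNIV. \<bar>Y i\<bar>) \<le> 6 * \<bar>Y i0\<bar>" by (simp add: card_3bool i0)
  then have "exp (g * (\<Sum>i\<in>UNIV. \<bar>Y i\<bar>)) \<le> exp (6 * g * \<bar>Y i0\<bar>)"
    using assms mult_left_mono[of "(\<Sum>i\<in>UNIV. \<bar>Y i\<bar>)" "6 * \<bar>Y i0\<bar>" g] by (simp add: mult_ac)
  also have "\<dots> \<le> exp ((6 * g) * Y i0) + exp ((- 6 * g) * Y i0)"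
  proof (cases "Y i0 \<ge> 0")
    case True
    then have "exp (6 * g * \<bar>Y i0\<bar>) = exp ((6 * g) * Y i0)" by simp
    moreover have "0 \<le> exp ((- 6 * g) * Y i0)" by simp
    ultimately show ?thesis by linarith
  next
    case False
    then have "exp (6 * g * \<bar>Y i0\<bar>) = exp ((- 6 * g) * Y i0)" by simp
    moreover have "0 \<le> exp ((6 * g) * Y i0)" by simp
    ultimately show ?thesis by linarith
  qed
  also have "\<dots> \<le> (\<Sum>i\<in>UNIV. exp ((6 * g) * Y i) + exp ((- 6 * g) * Y i))"
    by (rule member_le_sum) (auto intro: add_nonneg_nonneg)
  finally show ?thesis .
qed

lemma moment_finite_sum:
  fixes M :: "'w measure" and l :: "int^3 \<Rightarrow> 'w \<Rightarrow> real" and c :: real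
    and cv :: "int^3 \<Rightarrow> complex^3"
  assumes P: "prob_space M" and meas: "\<And>k. l k \<in> borel_measurable M"
    and ind: "prob_space.indep_vars M (\<lambda>_. borel) l UNIV"
    and sg: "\<And>k \<gamma>. (\<integral>\<^sup>+\<omega>. ennreal (exp (\<gamma> * l k \<omega>)) \<partial>M) \<le> ennreal (exp (c * \<gamma>^2))"
    and K: "finite K" and c: "c > 0" and r: "r \<ge> 1"
  shows "(\<integral>\<^sup>+\<omega>. ennreal (norm (\<Sum>k\<in>K. complex_of_real (l k \<omega>) *s cv k) powr r) \<partial>M)
     \<le> ennreal ((12 * exp (36 * c) * sqrt r) powr r * (\<Sum>k\<in>K. (norm (cv k))^2) powr (r/2))"
proof -
  define s2 where "s2 = (\<Sum>k\<in>K. (norm (cv k))^2)"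
  have s2nn: "s2 \<ge> 0" unfolding s2_def by (intro sum_nonneg) auto
  show ?thesis
  proof (cases "s2 = 0")
    case True
    then have "\<forall>k\<in>K. (norm (cv k))^2 = 0" unfolding s2_def
      by (subst (asm) sum_nonneg_eq_0_iff[OF K]) auto
    then have "\<forall>k\<in>K. cv k = 0" by simp
    then have "(\<Sum>k\<in>K. complex_of_real (l k \<omega>) *s cv k) = 0" for \<omega> by simp
    then show ?thesis by simp
  next
    case False
    then have s2pos: "s2 > 0" using s2nn by simp
    define \<sigma> where "\<sigma> = sqrt s2"
    have \<sigma>pos: "\<sigma> > 0" using s2pos by (simp add: \<sigma>_def)
    define g where "g = sqrt r / \<sigma>"
    have gpos: "g > 0" using r \<sigma>pos by (simp add: g_def)
    define A where "A = (r / g) powr r * exp (- r)"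
    have A0: "A \<ge> 0" by (simp add: A_def)
    define Y where "Y i \<omega> = (\<Sum>k\<in>K. comp i (cv k) * l k \<omega>)" for i \<omega>
    have pw: "ennreal (norm (\<Sum>k\<in>K. complex_of_real (l k \<omega>) *s cv k) powr r)
        \<le> ennreal A * (\<Sum>i\<in>UNIV. ennreal (exp ((6 * g) * Y i \<omega>)) + ennreal (exp ((- 6 * g) * Y i \<omega>)))" for \<omega>
    proof -
      define V where "V = (\<Sum>k\<in>K. complex_of_real (l k \<omega>) *s cv k)"
      have "norm V powr r \<le> A * exp (g * norm V)"
        unfolding A_def using powr_le_exp_bound[of "norm V" g r] gpos r by (simp add: mult.assoc)
      also have "exp (g * norm V) \<le> exp (g * (\<Sum>i\<in>UNIV. \<bar>comp i V\<bar>))"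
        using norm_le_comp[of V] gpos by simp
      also have "(\<Sum>i\<in>UNIV. \<bar>comp i V\<bar>) = (\<Sum>i\<in>UNIV. \<bar>Y i \<omega>\<bar>)"
        by (simp add: V_def Y_def comp_sum)
      also have "exp (g * (\<Sum>i\<in>UNIV. \<bar>Y i \<omega>\<bar>)) \<le> (\<Sum>i\<in>UNIV. exp ((6 * g) * Y i \<omega>) + exp ((- 6 * g) * Y i \<omega>))"
        by (rule exp_sum_abs_le) (use gpos in simp)
      finally have "norm V powr r \<le> A * (\<Sum>i\<in>UNIV. exp ((6 * g) * Y i \<omega>) + exp ((- 6 * g) * Y i \<omega>))"
        using A0 by (simp add: mult_left_mono)
      then have "ennreal (norm V powr r) \<le> ennreal (A * (\<Sum>i\<in>UNIV. exp ((6 * g) * Y i \<omega>) + exp ((- 6 * g) * Y i \<omega>)))"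
        by (rule ennreal_leI)
      also have "\<dots> = ennreal A * (\<Sum>i\<in>UNIV. ennreal (exp ((6 * g) * Y i \<omega>)) + ennreal (exp ((- 6 * g) * Y i \<omega>)))"
        using A0 by (simp add: ennreal_mult sum_nonneg add_nonneg_nonneg flip: ennreal_plus sum_ennreal)
      finally show ?thesis unfolding V_def .
    qed
    have Ymeas: "(\<lambda>\<omega>. Y i \<omega>) \<in> borel_measurable M" for i
      unfolding Y_def using meas by measurable
    have Ybound: "(\<integral>\<^sup>+\<omega>. ennreal (exp (h * Y i \<omega>)) \<partial>M) \<le> ennreal (exp (c * h^2 * s2))" for h i
    proof -
      have "(\<integral>\<^sup>+\<omega>. ennreal (exp (h * Y i \<omega>)) \<partial>M) \<le> ennreal (exp (c * h^2 * (\<Sum>k\<in>K. (comp i (cv k))^2)))"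
        unfolding Y_def by (rule mgf_finite_sum[OF P meas ind sg K])
      also have "\<dots> \<le> ennreal (exp (c * h^2 * s2))"
      proof (intro ennreal_leI exp_mono mult_left_mono)
        show "(\<Sum>k\<in>K. (comp i (cv k))^2) \<le> s2"
          unfolding s2_def
        proof (intro sum_mono)
          fix k
          have "\<bar>comp i (cv k)\<bar> \<le> norm (cv k)" by (rule comp_le_norm)
          then show "(comp i (cv k))^2 \<le> (norm (cv k))^2"
            by (metis abs_ge_zero power2_abs power_mono)
        qed
        show "0 \<le> c * h^2" using c by simp
      qed
      finally show ?thesis .
    qed
    have "(\<integral>\<^sup>+\<omega>. ennreal (norm (\<Sum>k\<in>K. complex_of_real (l k \<omega>) *s cv k) powr r) \<partial>M)
        \<le> (\<integral>\<^sup>+\<omega>. ennreal A * (\<Sum>i\<in>UNIV. ennreal (exp ((6 * g) * Y i \<omega>)) + ennreal (exp ((- 6 * g) * Y i \<omega>))) \<partial>M)"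
      by (intro nn_integral_mono pw)
    also have "\<dots> = ennreal A * (\<Sum>i\<in>UNIV. (\<integral>\<^sup>+\<omega>. ennreal (exp ((6 * g) * Y i \<omega>)) \<partial>M) + (\<integral>\<^sup>+\<omega>. ennreal (exp ((- 6 * g) * Y i \<omega>)) \<partial>M))"
      using Ymeas by (simp add: nn_integral_cmult nn_integral_sum nn_integral_add)
    also have "\<dots> \<le> ennreal A * (\<Sum>i\<in>(UNIV :: (3 \<times> bool) set). ennreal (exp (c * (6 * g)^2 * s2)) + ennreal (exp (c * (- 6 * g)^2 * s2)))"
      by (intro mult_left_mono sum_mono add_mono Ybound) auto
    also have "\<dots> = ennreal (A * 12 * exp (36 * c * r))"
    proof -
      have gs: "g^2 * s2 = r" using r s2pos \<sigma>pos by (simp add: g_def \<sigma>_def power_divide)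
      have "(\<Sum>i\<in>(UNIV :: (3 \<times> bool) set). ennreal (exp (c * (6 * g)^2 * s2)) + ennreal (exp (c * (- 6 * g)^2 * s2)))
          = (\<Sum>i\<in>(UNIV :: (3 \<times> bool) set). ennreal (2 * exp (36 * c * r)))"
      proof (intro sum.cong refl)
        fix i
        have "c * (6 * g)^2 * s2 = 36 * c * r" "c * (- 6 * g)^2 * s2 = 36 * c * r"
          using gs by (simp_all add: power_mult_distrib mult_ac)
        then show "ennreal (exp (c * (6 * g)^2 * s2)) + ennreal (exp (c * (- 6 * g)^2 * s2)) = ennreal (2 * exp (36 * c * r))"
          by (simp flip: ennreal_plus)
      qed
      also have "\<dots> = ennreal (12 * exp (36 * c * r))"
      proof -
        have "ennreal (12 * exp (36 * c * r)) = ennreal 6 * ennreal (2 * exp (36 * c * r))"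
          by (subst ennreal_mult[symmetric]) auto
        then show ?thesis by (simp add: card_3bool)
      qed
      finally show ?thesis using A0 by (simp add: ennreal_mult mult.assoc)
    qed
    also have "A * 12 * exp (36 * c * r) \<le> (12 * exp (36 * c) * sqrt r) powr r * s2 powr (r/2)"
    proof -
      have rg: "r / g = sqrt r * \<sigma>"
        using r \<sigma>pos by (simp add: g_def field_simps real_sqrt_mult_self)
      have sig: "\<sigma> powr r = s2 powr (r/2)"
        using s2pos by (simp add: \<sigma>_def powr_half_sqrt[symmetric] powr_powr)
      have "A * 12 * exp (36 * c * r) = (sqrt r) powr r * s2 powr (r/2) * (12 * exp (- r)) * exp (36 * c * r)"
        using r \<sigma>pos by (simp add: A_def rg powr_mult sig mult_ac)
      also have "\<dots> \<le> (sqrt r) powr r * s2 powr (r/2) * 12 powr r * exp (36 * c * r)"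
      proof -
        have "12 * exp (- r) \<le> 12 powr r"
        proof -
          have "exp (- r) \<le> 1" using r by simp then have "12 * exp (- r) \<le> 12" by linarith
          also have "(12::real) \<le> 12 powr r" using r by (simp add: ge_one_powr_ge_zero powr_mono[of 1 r 12, simplified])
          finally show ?thesis .
        qed
        then show ?thesis by (intro mult_right_mono mult_left_mono) auto
      qed
      also have "\<dots> = (12 * exp (36 * c) * sqrt r) powr r * s2 powr (r/2)"
      proof -
        have "(12 * exp (36 * c) * sqrt r) powr r = 12 powr r * exp (36 * c) powr r * sqrt r powr r"
          by (simp add: powr_mult)
        also have "exp (36 * c) powr r = exp (36 * c * r)" by (rule exp_powr_real)
        finally show ?thesis by (simp add: mult_ac)
      qed
      finally show ?thesis .
    qed
    finally show ?thesis unfolding s2_def by (simp add: ennreal_leI)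
  qed
qed

lemma exp_decay_integral:
  fixes N q T :: real
  assumes N: "N > 0" and q: "q > 0" and T: "T > 0"
  shows "(\<integral>\<^sup>+t\<in>{0<..<T}. ennreal (N * exp (- q * t * N)) \<partial>lborel) \<le> ennreal (1 / q)"
proof -
  define F where "F t = - exp (- q * t * N) / q" for t
  have hi: "((\<lambda>t. N * exp (- q * t * N)) has_integral (F T - F 0)) {0..T}"
  proof (rule fundamental_theorem_of_calculus)
    show "0 \<le> T" using T by simp
    fix x assume "x \<in> {0..T}"
    show "(F has_vector_derivative N * exp (- q * x * N)) (at x within {0..T})"
      unfolding F_def has_real_derivative_iff_has_vector_derivative[symmetric]
      using q by (auto intro!: derivative_eq_intros simp: field_simps)
  qed
  have "(\<integral>\<^sup>+t. ennreal (N * exp (- q * t * N)) * indicator {0..T} t \<partial>lborel) = ennreal (F T - F 0)"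
    by (rule nn_integral_has_integral_lebesgue'[OF _ hi]) (use N in auto)
  moreover have "F T - F 0 \<le> 1 / q"
    using q by (simp add: F_def field_simps)
  moreover have "(\<integral>\<^sup>+t\<in>{0<..<T}. ennreal (N * exp (- q * t * N)) \<partial>lborel)
      \<le> (\<integral>\<^sup>+t. ennreal (N * exp (- q * t * N)) * indicator {0..T} t \<partial>lborel)"
    by (intro nn_integral_mono) (auto split: split_indicator)
  ultimately show ?thesis
    by (metis ennreal_leI order_trans)
qed

lemma knorm2_nonneg: "knorm2 k \<ge> 0"
  unfolding knorm2_def by (intro sum_nonneg) auto

lemma knorm2_ge1: assumes "k \<noteq> 0" shows "knorm2 k \<ge> 1"
proof -
  obtain i where i: "k $ i \<noteq> 0" using assms by (metis vec_eq_iff zero_index)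
  then have "1 \<le> (real_of_int (k $ i))^2"
    by (smt (verit) of_int_0_eq_iff of_int_less_1_iff one_le_power power2_abs power2_less_0 zero_less_abs_iff abs_ge_self int_one_le_iff_zero_less of_int_abs of_int_1_le_iff power_one_right)
  also have "\<dots> \<le> knorm2 k"
    unfolding knorm2_def by (rule member_le_sum) auto
  finally show ?thesis .
qed

lemma knorm2_zero[simp]: "knorm2 0 = 0"
  by (simp add: knorm2_def)

lemma time_weight_bound:
  fixes \<alpha> s q T :: real and k :: "int^3"
  assumes \<alpha>: "\<alpha> > 0" and q: "q \<ge> 1" and T: "T > 0" and s: "- s * q / 2 \<le> \<alpha>"
  shows "(\<integral>\<^sup>+t\<in>{0<..<T}. ennreal ((1 + knorm2 k) powr (- s * q / 2) * exp (- q * t * knorm2 k powr \<alpha>)) \<partial>lborel)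
    \<le> ennreal (T + 2 powr \<alpha>)"
proof (cases "k = 0")
  case True
  have "(\<integral>\<^sup>+t\<in>{0<..<T}. ennreal ((1 + knorm2 k) powr (- s * q / 2) * exp (- q * t * knorm2 k powr \<alpha>)) \<partial>lborel)
      = (\<integral>\<^sup>+t. indicator {0<..<T} t \<partial>lborel)"
    using True by (intro nn_integral_cong) simp
  also have "\<dots> = ennreal T" using T by simp
  finally show ?thesis using \<alpha> by (simp add: ennreal_leI)
next
  case False
  define K2 where "K2 = knorm2 k"
  have K1: "K2 \<ge> 1" using knorm2_ge1[OF False] by (simp add: K2_def)
  define N where "N = K2 powr \<alpha>"
  have N1: "N \<ge> 1" using K1 \<alpha> by (simp add: N_def ge_one_powr_ge_zero)
  have w: "(1 + K2) powr (- s * q / 2) \<le> 2 powr \<alpha> * N"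
  proof -
    have "(1 + K2) powr (- s * q / 2) \<le> (1 + K2) powr \<alpha>"
      using K1 s by (intro powr_mono) auto
    also have "\<dots> \<le> (2 * K2) powr \<alpha>"
      using K1 \<alpha> by (intro powr_mono2) auto
    also have "\<dots> = 2 powr \<alpha> * N"
      using K1 by (simp add: N_def powr_mult)
    finally show ?thesis .
  qed
  have "(\<integral>\<^sup>+t\<in>{0<..<T}. ennreal ((1 + knorm2 k) powr (- s * q / 2) * exp (- q * t * knorm2 k powr \<alpha>)) \<partial>lborel)
      \<le> (\<integral>\<^sup>+t\<in>{0<..<T}. ennreal (2 powr \<alpha>) * ennreal (N * exp (- q * t * N)) \<partial>lborel)"
    by (intro nn_integral_mono mult_right_mono)
       (use w N1 in \<open>auto simp: K2_def N_def ennreal_mult[symmetric] intro!: ennreal_leI mult_right_mono\<close>)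
  also have "\<dots> = ennreal (2 powr \<alpha>) * (\<integral>\<^sup>+t\<in>{0<..<T}. ennreal (N * exp (- q * t * N)) \<partial>lborel)"
    by (subst nn_integral_cmult[symmetric]) (auto simp: mult.assoc)
  also have "\<dots> \<le> ennreal (2 powr \<alpha>) * ennreal (1 / q)"
    by (intro mult_left_mono exp_decay_integral) (use N1 q T in auto)
  also have "\<dots> \<le> ennreal (T + 2 powr \<alpha>)"
  proof -
    have "2 powr \<alpha> * (1 / q) \<le> 2 powr \<alpha> * 1"
      using q by (intro mult_left_mono) auto
    then have "2 powr \<alpha> * (1 / q) \<le> T + 2 powr \<alpha>" using T by simp
    moreover have "ennreal (2 powr \<alpha>) * ennreal (1 / q) = ennreal (2 powr \<alpha> * (1 / q))"
      by (rule ennreal_mult[symmetric]) (use q in auto)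
    ultimately show ?thesis by (simp add: ennreal_leI)
  qed
  finally show ?thesis .
qed

lemma nn_count_infsum:
  fixes f :: "'a \<Rightarrow> real"
  assumes nn: "\<And>x. f x \<ge> 0" and sm: "f summable_on UNIV"
  shows "(\<integral>\<^sup>+x. ennreal (f x) \<partial>count_space UNIV) = ennreal (infsum f UNIV)"
proof -
  have "Infinite_Sum.abs_summable_on f UNIV"
    using sm summable_on_iff_abs_summable_on_real by blast
  then have a: "Infinite_Set_Sum.abs_summable_on f UNIV" using abs_summable_equivalent by blast
  have "(\<integral>\<^sup>+x. ennreal (f x) \<partial>count_space UNIV) = ennreal (infsetsum f UNIV)"
    using nn_integral_conv_infsetsum[OF a] nn by simp
  also have "infsetsum f UNIV = infsum f UNIV" by (rule infsetsum_infsum[OF a])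
  finally show ?thesis .
qed

definition Sfun :: "real \<Rightarrow> (int^3 \<Rightarrow> complex^3) \<Rightarrow> real \<Rightarrow> ennreal" where
  "Sfun \<alpha> a t = (\<integral>\<^sup>+k. ennreal (exp (- 2 * t * knorm2 k powr \<alpha>) * (norm (a k))^2) \<partial>count_space UNIV)"

lemma time_sum_bound:
  fixes \<alpha> s q T A :: real and a :: "int^3 \<Rightarrow> complex^3"
  assumes \<alpha>: "\<alpha> > 0" and q: "q \<ge> 2" and T: "T > 0" and s: "s \<ge> - 2 * \<alpha> / q"
    and sm: "(\<lambda>k. (1 + knorm2 k) powr s * (norm (a k))^2) summable_on UNIV"
    and A: "A = (\<Sum>\<^sub>\<infinity>k. (1 + knorm2 k) powr s * (norm (a k))^2)" and Apos: "A > 0"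
  shows "(\<integral>\<^sup>+t\<in>{0<..<T}. epowr (Sfun \<alpha> a t) (q/2) \<partial>lborel) \<le> ennreal ((T + 2 powr \<alpha>) * A powr (q/2))"
proof -
  define m where "m = q / 2"
  have m1: "m \<ge> 1" using q by (simp add: m_def)
  define Q where "Q = 1 / m"
  have Q: "0 < Q" "Q \<le> 1" using m1 by (auto simp: Q_def)
  have mQ: "m * Q = 1" "Q * m = 1" using m1 by (auto simp: Q_def)
  define w where "w k = (1 + knorm2 k) powr s" for k
  have wpos: "w k > 0" for k using knorm2_nonneg[of k] by (simp add: w_def)
  define b where "b k = w k * (norm (a k))^2" for k
  have b0: "b k \<ge> 0" for k using wpos[of k] by (simp add: b_def)
  define N where "N k = knorm2 k powr \<alpha>" for k
  have bA: "(\<integral>\<^sup>+k. ennreal (b k) \<partial>count_space UNIV) = ennreal A"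
    unfolding A b_def w_def by (rule nn_count_infsum[OF _ sm]) (simp add: knorm2_nonneg)
  define C0 where "C0 = T + 2 powr \<alpha>"
  define g where "g k t = ennreal (b k * ((1 + knorm2 k) powr (- s * q / 2) * exp (- q * t * N k)))" for k t
  have step: "epowr (Sfun \<alpha> a t) m \<le> ennreal (A powr (m - 1)) * (\<integral>\<^sup>+k. g k t \<partial>count_space UNIV)" for t
  proof -
    define J where "J k = ennreal ((exp (- 2 * t * N k) * (norm (a k))^2) powr m)" for k
    have JQ: "epowr (J k) Q = ennreal (exp (- 2 * t * N k) * (norm (a k))^2)" for k
      by (simp add: J_def epowr_ennreal powr_powr mQ)
    have uJ: "b k = 0 \<Longrightarrow> J k = 0" for k
      using wpos[of k] m1 by (simp add: b_def J_def)
    have wj: "(\<integral>\<^sup>+k. epowr (J k) Q \<partial>count_space UNIV) \<le>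
        ennreal (A powr (1 - Q)) * epowr (\<integral>\<^sup>+k. ennreal (b k powr (1 - 1/Q)) * J k \<partial>count_space UNIV) Q"
      by (rule weighted_jensen[OF _ _ b0 uJ bA Apos Q]) auto
    have pt: "ennreal (b k powr (1 - 1/Q)) * J k = g k t" for k
    proof (cases "b k = 0")
      case True then show ?thesis by (simp add: g_def uJ)
    next
      case False
      then have bp: "b k > 0" using b0[of k] by simp
      have an: "(norm (a k))^2 = b k / w k" using wpos[of k] by (simp add: b_def)
      have "b k powr (1 - 1/Q) * (exp (- 2 * t * N k) * (norm (a k))^2) powr m
          = b k powr (1 - m) * (exp (- 2 * t * N k) powr m * b k powr m * w k powr (- m))"
        using bp wpos[of k] by (simp add: an Q_def powr_mult powr_divide powr_minus divide_inverse inverse_powr)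
      also have "\<dots> = b k * (w k powr (- m) * exp (- 2 * t * N k) powr m)"
        using bp by (simp add: powr_add[symmetric] mult_ac)
      also have "w k powr (- m) = (1 + knorm2 k) powr (- s * q / 2)"
        using knorm2_nonneg[of k] by (simp add: w_def powr_powr m_def)
      also have "exp (- 2 * t * N k) powr m = exp (- q * t * N k)"
        by (simp add: exp_powr_real m_def)
      finally show ?thesis
        using bp by (simp add: g_def J_def ennreal_mult[symmetric] mult_ac)
    qed
    have "Sfun \<alpha> a t = (\<integral>\<^sup>+k. epowr (J k) Q \<partial>count_space UNIV)"
      by (simp add: Sfun_def JQ N_def)
    then have "epowr (Sfun \<alpha> a t) m \<le> epowr (ennreal (A powr (1 - Q)) * epowr (\<integral>\<^sup>+k. g k t \<partial>count_space UNIV) Q) m"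
      using wj pt m1 by (intro epowr_mono) auto
    also have "\<dots> = ennreal (A powr (m - 1)) * (\<integral>\<^sup>+k. g k t \<partial>count_space UNIV)"
      using m1 Q Apos by (simp add: epowr_mult epowr_epowr epowr_ennreal powr_powr mQ algebra_simps Q_def)
    finally show ?thesis .
  qed
  have gmeas: "(\<lambda>t. g k t) \<in> borel_measurable lborel" for k
    unfolding g_def by measurable
  have "(\<integral>\<^sup>+t\<in>{0<..<T}. epowr (Sfun \<alpha> a t) (q/2) \<partial>lborel)
      \<le> (\<integral>\<^sup>+t. (\<integral>\<^sup>+k. ennreal (A powr (m - 1)) * g k t * indicator {0<..<T} t \<partial>count_space UNIV) \<partial>lborel)"
  proof (intro nn_integral_mono)
    fix t
    have "epowr (Sfun \<alpha> a t) (q/2) * indicator {0<..<T} t \<le> ennreal (A powr (m - 1)) * (\<integral>\<^sup>+k. g k t \<partial>count_space UNIV) * indicator {0<..<T} t"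
      using step[of t] by (simp add: m_def mult_right_mono)
    also have "\<dots> = (\<integral>\<^sup>+k. ennreal (A powr (m - 1)) * g k t * indicator {0<..<T} t \<partial>count_space UNIV)"
      by (simp add: nn_integral_cmult nn_integral_multc)
    finally show "epowr (Sfun \<alpha> a t) (q/2) * indicator {0<..<T} t \<le> \<dots>" .
  qed
  also have "\<dots> = (\<integral>\<^sup>+k. (\<integral>\<^sup>+t. ennreal (A powr (m - 1)) * g k t * indicator {0<..<T} t \<partial>lborel) \<partial>count_space UNIV)"
  proof (rule nn_integral_count_space_nn_integral)
    show "countable (UNIV :: (int^3) set)" by simp
    fix k :: "int^3"
    show "(\<lambda>t. ennreal (A powr (m - 1)) * g k t * indicator {0<..<T} t) \<in> borel_measurable lborel"
      unfolding g_def by measurable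
  qed
  also have "\<dots> \<le> (\<integral>\<^sup>+k. ennreal (A powr (m - 1)) * (ennreal (b k) * ennreal C0) \<partial>count_space UNIV)"
  proof (intro nn_integral_mono)
    fix k
    have "(\<integral>\<^sup>+t. ennreal (A powr (m - 1)) * g k t * indicator {0<..<T} t \<partial>lborel)
        = ennreal (A powr (m - 1)) * (ennreal (b k) * (\<integral>\<^sup>+t\<in>{0<..<T}. ennreal ((1 + knorm2 k) powr (- s * q / 2) * exp (- q * t * knorm2 k powr \<alpha>)) \<partial>lborel))"
    proof -
      define h where "h t = (1 + knorm2 k) powr (- s * q / 2) * exp (- q * t * knorm2 k powr \<alpha>)" for t
      have h0: "h t \<ge> 0" for t by (simp add: h_def)
      have "g k t = ennreal (b k) * ennreal (h t)" for t
        unfolding g_def h_def N_def by (rule ennreal_mult[OF b0 h0[unfolded h_def]])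
      then have "(\<integral>\<^sup>+t. ennreal (A powr (m - 1)) * g k t * indicator {0<..<T} t \<partial>lborel)
          = (\<integral>\<^sup>+t. ennreal (A powr (m - 1)) * (ennreal (b k) * (ennreal (h t) * indicator {0<..<T} t)) \<partial>lborel)"
        by (simp add: mult.assoc)
      also have "\<dots> = ennreal (A powr (m - 1)) * (\<integral>\<^sup>+t. ennreal (b k) * (ennreal (h t) * indicator {0<..<T} t) \<partial>lborel)"
        by (rule nn_integral_cmult) (unfold h_def, measurable)
      also have "(\<integral>\<^sup>+t. ennreal (b k) * (ennreal (h t) * indicator {0<..<T} t) \<partial>lborel)
          = ennreal (b k) * (\<integral>\<^sup>+t. ennreal (h t) * indicator {0<..<T} t \<partial>lborel)"
        by (rule nn_integral_cmult) (unfold h_def, measurable)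
      finally show ?thesis by (simp add: h_def)
    qed
    also have "\<dots> \<le> ennreal (A powr (m - 1)) * (ennreal (b k) * ennreal C0)"
    proof (intro mult_left_mono)
      show "(\<integral>\<^sup>+t\<in>{0<..<T}. ennreal ((1 + knorm2 k) powr (- s * q / 2) * exp (- q * t * knorm2 k powr \<alpha>)) \<partial>lborel) \<le> ennreal C0"
        unfolding C0_def
      proof (rule time_weight_bound[OF \<alpha> _ T])
        show "1 \<le> q" using q by simp
        show "- s * q / 2 \<le> \<alpha>" using s q by (simp add: field_simps)
      qed
    qed auto
    finally show "(\<integral>\<^sup>+t. ennreal (A powr (m - 1)) * g k t * indicator {0<..<T} t \<partial>lborel) \<le> \<dots>" .
  qed
  also have "\<dots> = ennreal (A powr (m - 1)) * (ennreal A * ennreal C0)"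
    by (simp add: nn_integral_cmult nn_integral_multc bA)
  also have "\<dots> = ennreal ((T + 2 powr \<alpha>) * A powr (q/2))"
  proof -
    have pa: "A powr (m - 1) * A = A powr m"
      using Apos powr_add[of A "m - 1" 1] by simp
    have C0: "C0 \<ge> 0" using T by (simp add: C0_def)
    have "ennreal (A powr (m - 1)) * (ennreal A * ennreal C0) = ennreal (A powr (m - 1) * (A * C0))"
      using Apos C0 by (simp add: ennreal_mult)
    also have "A powr (m - 1) * (A * C0) = C0 * A powr m"
      using pa by (simp add: mult_ac)
    finally show ?thesis by (simp add: C0_def m_def)
  qed
  finally show ?thesis .
qed

lemma smult_eq: "z *s (v :: complex^3) = (\<chi> j. z * v $ j)"
  by (simp add: vector_scalar_mult_def)

lemma norm_smult: "norm (z *s (v :: complex^3)) = cmod z * norm v"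
  unfolding norm_vec_def smult_eq
  by (simp add: L2_set_right_distrib norm_mult)

lemma ofreal_smult: "complex_of_real y *s (v :: complex^3) = y *\<^sub>R v"
proof -
  have "(y *\<^sub>R v) $ i = complex_of_real y * v $ i" for i
    by (rule vector_scaleR_component[THEN trans]) (simp only: scaleR_conv_of_real)
  then show ?thesis by (simp add: vec_eq_iff smult_eq)
qed

definition cvec :: "real \<Rightarrow> (int^3 \<Rightarrow> complex^3) \<Rightarrow> int^3 \<Rightarrow> real \<Rightarrow> real^3 \<Rightarrow> complex^3" where
  "cvec \<alpha> a k t x = (complex_of_real (exp (- t * knorm2 k powr \<alpha>)) * cis (kdot k x)) *s a k"

definition cube :: "nat \<Rightarrow> (int^3) set" where
  "cube n = {k. \<forall>i. \<bar>k $ i\<bar> \<le> int n}"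

definition Fn :: "real \<Rightarrow> (int^3 \<Rightarrow> 'w \<Rightarrow> real) \<Rightarrow> (int^3 \<Rightarrow> complex^3) \<Rightarrow> nat \<Rightarrow> 'w \<Rightarrow> real \<Rightarrow> real^3 \<Rightarrow> complex^3" where
  "Fn \<alpha> l a n \<omega> t x = (\<Sum>k\<in>cube n. complex_of_real (l k \<omega>) *s cvec \<alpha> a k t x)"

lemma fterm_eq:
  "(complex_of_real (exp (- t * knorm2 k powr \<alpha>) * l k \<omega>) * cis (kdot k x)) *s a k
   = complex_of_real (l k \<omega>) *s cvec \<alpha> a k t x"
  by (simp add: cvec_def vec_eq_iff smult_eq mult_ac)

lemma norm_cvec: "norm (cvec \<alpha> a k t x) = exp (- t * knorm2 k powr \<alpha>) * norm (a k)"
  by (simp add: cvec_def norm_smult norm_mult)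

lemma norm_cvec2: "(norm (cvec \<alpha> a k t x))^2 = exp (- 2 * t * knorm2 k powr \<alpha>) * (norm (a k))^2"
proof -
  have "exp (- t * knorm2 k powr \<alpha>) ^ 2 = exp (- 2 * t * knorm2 k powr \<alpha>)"
    by (simp add: exp_double[symmetric] power2_eq_square exp_add[symmetric])
  then show ?thesis by (simp add: norm_cvec power_mult_distrib)
qed

lemma finite_cube: "finite (cube n)"
proof -
  have "cube n \<subseteq> vec_lambda ` (Pi\<^sub>E UNIV (\<lambda>_. {- int n..int n}))"
  proof
    fix k assume "k \<in> cube n"
    have "- int n \<le> k $ i \<and> k $ i \<le> int n" for i
    proof -
      have "\<bar>k $ i\<bar> \<le> int n" using \<open>k \<in> cube n\<close> by (simp add: cube_def)
      then show ?thesis by (simp add: abs_le_iff)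
    qed
    then have "k = vec_lambda (\<lambda>i. k $ i)" "(\<lambda>i. k $ i) \<in> Pi\<^sub>E UNIV (\<lambda>_. {- int n..int n})"
      by auto
    then show "k \<in> vec_lambda ` (Pi\<^sub>E UNIV (\<lambda>_. {- int n..int n}))" by blast
  qed
  moreover have "finite (vec_lambda ` (Pi\<^sub>E UNIV (\<lambda>_. {- int n..int n})))"
    by (intro finite_imageI finite_PiE) auto
  ultimately show ?thesis by (rule finite_subset)
qed

lemma cube_mono: assumes "m \<le> n" shows "cube m \<subseteq> cube n"
proof
  fix k assume k: "k \<in> cube m"
  have "\<bar>k $ i\<bar> \<le> int n" for i
  proof -
    have "\<bar>k $ i\<bar> \<le> int m" using k by (simp add: cube_def)
    moreover have "int m \<le> int n" using assms by simp
    ultimately show ?thesis by linarith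
  qed
  then show "k \<in> cube n" by (simp add: cube_def)
qed

lemma in_cube: "k \<in> cube (nat (\<Sum>i\<in>UNIV. \<bar>k $ i\<bar>))"
proof -
  have "\<bar>k $ i\<bar> \<le> (\<Sum>i\<in>UNIV. \<bar>k $ i\<bar>)" for i
    by (rule member_le_sum) auto
  then have "\<bar>k $ i\<bar> \<le> int (nat (\<Sum>i\<in>UNIV. \<bar>k $ i\<bar>))" for i
    by (simp add: sum_nonneg)
  then show ?thesis unfolding cube_def by blast
qed

lemma cube_filterlim: "filterlim cube (finite_subsets_at_top UNIV) sequentially"
  unfolding filterlim_finite_subsets_at_top
proof (intro allI impI)
  fix X :: "(int^3) set" assume "finite X \<and> X \<subseteq> UNIV"
  then have fin: "finite X" by simp
  have "\<forall>k\<in>X. eventually (\<lambda>n. k \<in> cube n) sequentially"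
  proof
    fix k
    have *: "k \<in> cube n" if "nat (\<Sum>i\<in>UNIV. \<bar>k $ i\<bar>) \<le> n" for n
      using in_cube[of k] cube_mono[OF that] by (rule subsetD[rotated])
    show "eventually (\<lambda>n. k \<in> cube n) sequentially"
      by (rule eventually_mono[OF eventually_ge_at_top *])
  qed
  then have ev: "eventually (\<lambda>n. \<forall>k\<in>X. k \<in> cube n) sequentially"
    by (rule eventually_ball_finite[OF fin])
  show "eventually (\<lambda>n. finite (cube n) \<and> X \<subseteq> cube n \<and> cube n \<subseteq> UNIV) sequentially"
    using ev by (rule eventually_mono) (auto simp: finite_cube)
qed

lemma free_evol_le_liminf:
  assumes r: "r > 0"
  shows "ennreal (norm (free_evol \<alpha> l a \<omega> t x) powr r) \<le> liminf (\<lambda>n. ennreal (norm (Fn \<alpha> l a n \<omega> t x) powr r))"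
proof -
  define f where "f k = complex_of_real (l k \<omega>) *s cvec \<alpha> a k t x" for k
  have fe: "free_evol \<alpha> l a \<omega> t x = infsum f UNIV"
    unfolding free_evol_def f_def fterm_eq ..
  show ?thesis
  proof (cases "f summable_on UNIV")
    case True
    then have "(sum f \<longlongrightarrow> infsum f UNIV) (finite_subsets_at_top UNIV)"
      using has_sum_infsum[OF True] unfolding has_sum_def by simp
    then have "((\<lambda>n. sum f (cube n)) \<longlongrightarrow> infsum f UNIV) sequentially"
      by (rule filterlim_compose[OF _ cube_filterlim])
    then have "((\<lambda>n. ennreal (norm (sum f (cube n)) powr r)) \<longlongrightarrow> ennreal (norm (infsum f UNIV) powr r)) sequentially"
      using r by (intro tendsto_ennrealI tendsto_powr' tendsto_norm) auto
    then have "liminf (\<lambda>n. ennreal (norm (sum f (cube n)) powr r)) = ennreal (norm (infsum f UNIV) powr r)"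
      by (intro lim_imp_Liminf) auto
    moreover have "Fn \<alpha> l a n \<omega> t x = sum f (cube n)" for n
      by (simp add: Fn_def f_def)
    ultimately show ?thesis using fe by simp
  next
    case False
    then have "infsum f UNIV = 0" by (rule infsum_not_exists)
    then show ?thesis using fe r by simp
  qed
qed

lemma cont_cvec: "continuous_on UNIV (\<lambda>p::real \<times> (real^3). cvec \<alpha> a k (fst p) (snd p))"
  unfolding cvec_def smult_eq kdot_def
  by (intro continuous_intros continuous_on_vec_lambda)

lemma meas_cvec:
  fixes M :: "'w measure"
  shows "(\<lambda>z::(('w \<times> real) \<times> (real^3)). cvec \<alpha> a k (snd (fst z)) (snd z)) \<in> borel_measurable ((M \<Otimes>\<^sub>M lborel) \<Otimes>\<^sub>M lborel)"
proof -
  have "(\<lambda>z::(('w \<times> real) \<times> (real^3)). (snd (fst z), snd z)) \<in> borel_measurable ((M \<Otimes>\<^sub>M lborel) \<Otimes>\<^sub>M lborel)"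
    unfolding borel_prod[symmetric] by measurable
  from borel_measurable_continuous_on[OF cont_cvec this] show ?thesis by simp
qed

lemma meas_Fn:
  fixes M :: "'w measure"
  assumes meas: "\<And>k. l k \<in> borel_measurable M"
  shows "(\<lambda>z::(('w \<times> real) \<times> (real^3)). Fn \<alpha> l a n (fst (fst z)) (snd (fst z)) (snd z)) \<in> borel_measurable ((M \<Otimes>\<^sub>M lborel) \<Otimes>\<^sub>M lborel)"
proof -
  note meas_cvec[measurable] meas[measurable]
  show ?thesis unfolding Fn_def ofreal_smult by measurable
qed

lemma meas_Fn_omega:
  fixes M :: "'w measure"
  assumes meas: "\<And>k. l k \<in> borel_measurable M"
  shows "(\<lambda>\<omega>. Fn \<alpha> l a n \<omega> t x) \<in> borel_measurable M"
proof -
  note meas[measurable]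
  show ?thesis unfolding Fn_def ofreal_smult by measurable
qed

lemma torus_cbox: "torus = cbox (0::real^3) (\<chi> i. 2 * pi)"
  unfolding torus_def by (auto simp: mem_box_cart(2))

lemma torus_measure: "emeasure lborel torus = ennreal ((2 * pi)^3)"
proof -
  have inner: "b \<in> Basis \<Longrightarrow> ((\<chi> i. 2 * pi) :: real^3) \<bullet> b = 2 * pi" for b
    by (auto simp: Basis_vec_def inner_axis)
  have cond: "\<forall>b\<in>(Basis::(real^3) set). (0::real^3) \<bullet> b \<le> (\<chi> i. 2 * pi) \<bullet> b"
    using inner by simp
  have "(\<Prod>b\<in>(Basis::(real^3) set). ((\<chi> i. 2 * pi) - 0) \<bullet> b) = (\<Prod>b\<in>(Basis::(real^3) set). 2 * pi)"
    by (rule prod.cong) (simp_all add: inner)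
  also have "\<dots> = (2 * pi)^3" by simp
  finally have pr: "(\<Prod>b\<in>(Basis::(real^3) set). ((\<chi> i. 2 * pi) - 0) \<bullet> b) = (2 * pi)^3" .
  show ?thesis
    unfolding torus_cbox emeasure_lborel_cbox_eq using cond pr by simp
qed

lemma torus_indicator_integral: "(\<integral>\<^sup>+x. ennreal (indicator torus x) \<partial>lborel) = ennreal ((2 * pi)^3)"
proof -
  have "torus \<in> sets lborel" unfolding torus_cbox by simp
  then show ?thesis using torus_measure by (simp add: ennreal_indicator nn_integral_indicator)
qed

lemma torus_sets[measurable]: "torus \<in> sets borel"
  unfolding torus_cbox by simp

lemma meas_Sfun[measurable]: "(\<lambda>t. Sfun \<alpha> a t) \<in> borel_measurable lborel"
proof -
  have "(\<lambda>(k, t). ennreal (exp (- 2 * t * knorm2 k powr \<alpha>) * (norm (a k))^2)) \<in> borel_measurable (count_space UNIV \<Otimes>\<^sub>M lborel)"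
    by (rule measurable_pair_measure_countable1) auto
  then have "(\<lambda>(t, k). ennreal (exp (- 2 * t * knorm2 k powr \<alpha>) * (norm (a k))^2)) \<in> borel_measurable (lborel \<Otimes>\<^sub>M count_space UNIV)"
    by (subst measurable_pair_swap_iff) simp
  then show ?thesis unfolding Sfun_def
    by (rule sigma_finite_measure.borel_measurable_nn_integral[OF sigma_finite_measure_count_space])
qed

lemma Liminf_le_bound:
  fixes X :: "nat \<Rightarrow> ennreal"
  assumes "\<And>n. X n \<le> B"
  shows "liminf X \<le> B"
proof -
  have "liminf X \<le> limsup X" by (rule Liminf_le_Limsup) simp
  also have "limsup X \<le> B" by (rule Limsup_bounded) (use assms in auto)
  finally show ?thesis .
qed

lemma E_bound:
  fixes M :: "'w measure" and l :: "int^3 \<Rightarrow> 'w \<Rightarrow> real" and c :: real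
    and a :: "int^3 \<Rightarrow> complex^3" and t r :: real and x :: "real^3"
  assumes P: "prob_space M" and meas: "\<And>k. l k \<in> borel_measurable M"
    and ind: "prob_space.indep_vars M (\<lambda>_. borel) l UNIV"
    and sg: "\<And>k \<gamma>. (\<integral>\<^sup>+\<omega>. ennreal (exp (\<gamma> * l k \<omega>)) \<partial>M) \<le> ennreal (exp (c * \<gamma>^2))"
    and c: "c > 0" and r: "r \<ge> 1"
  shows "(\<integral>\<^sup>+\<omega>. liminf (\<lambda>n. ennreal (norm (Fn \<alpha> l a n \<omega> t x) powr r)) \<partial>M)
    \<le> ennreal ((12 * exp (36 * c) * sqrt r) powr r) * epowr (Sfun \<alpha> a t) (r/2)"
proof -
  have "(\<integral>\<^sup>+\<omega>. liminf (\<lambda>n. ennreal (norm (Fn \<alpha> l a n \<omega> t x) powr r)) \<partial>M)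
      \<le> liminf (\<lambda>n. \<integral>\<^sup>+\<omega>. ennreal (norm (Fn \<alpha> l a n \<omega> t x) powr r) \<partial>M)"
  proof (rule nn_integral_liminf)
    fix n
    note meas_Fn_omega[OF meas, measurable]
    show "(\<lambda>\<omega>. ennreal (norm (Fn \<alpha> l a n \<omega> t x) powr r)) \<in> borel_measurable M" by measurable
  qed
  also have "\<dots> \<le> ennreal ((12 * exp (36 * c) * sqrt r) powr r) * epowr (Sfun \<alpha> a t) (r/2)"
  proof (rule Liminf_le_bound)
    fix n
    define s2 where "s2 = (\<Sum>k\<in>cube n. (norm (cvec \<alpha> a k t x))^2)"
    have s20: "s2 \<ge> 0" unfolding s2_def by (intro sum_nonneg) auto
    have "(\<integral>\<^sup>+\<omega>. ennreal (norm (Fn \<alpha> l a n \<omega> t x) powr r) \<partial>M)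
        \<le> ennreal ((12 * exp (36 * c) * sqrt r) powr r * s2 powr (r/2))"
      unfolding Fn_def s2_def by (rule moment_finite_sum[OF P meas ind sg finite_cube c r])
    also have "\<dots> = ennreal ((12 * exp (36 * c) * sqrt r) powr r) * epowr (ennreal s2) (r/2)"
      using s20 by (simp add: epowr_ennreal ennreal_mult)
    also have "\<dots> \<le> ennreal ((12 * exp (36 * c) * sqrt r) powr r) * epowr (Sfun \<alpha> a t) (r/2)"
    proof (intro mult_left_mono epowr_mono)
      have "ennreal s2 = (\<Sum>k\<in>cube n. ennreal (exp (- 2 * t * knorm2 k powr \<alpha>) * (norm (a k))^2))"
        unfolding s2_def norm_cvec2 by (simp add: sum_nonneg)
      also have "\<dots> = (\<integral>\<^sup>+k. ennreal (exp (- 2 * t * knorm2 k powr \<alpha>) * (norm (a k))^2) \<partial>count_space (cube n))"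
        by (rule nn_integral_count_space_finite[OF finite_cube, symmetric])
      also have "\<dots> = (\<integral>\<^sup>+k. ennreal (exp (- 2 * t * knorm2 k powr \<alpha>) * (norm (a k))^2) * indicator (cube n) k \<partial>count_space UNIV)"
        by (rule nn_integral_count_space_indicator) simp
      also have "\<dots> \<le> Sfun \<alpha> a t"
        unfolding Sfun_def by (intro nn_integral_mono) (auto split: split_indicator)
      finally show "ennreal s2 \<le> Sfun \<alpha> a t" .
    qed (use r in auto)
    finally show "(\<integral>\<^sup>+\<omega>. ennreal (norm (Fn \<alpha> l a n \<omega> t x) powr r) \<partial>M) \<le> \<dots>" .
  qed
  finally show ?thesis .
qed

lemma cont_meas_pair:
  fixes g :: "real \<times> (real^3) \<Rightarrow> 'b::{second_countable_topology, topological_space}"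
  assumes "continuous_on UNIV g"
  shows "g \<in> borel_measurable (lborel \<Otimes>\<^sub>M lborel)"
proof -
  have "(\<lambda>p::real \<times> (real^3). (fst p, snd p)) \<in> borel_measurable (lborel \<Otimes>\<^sub>M lborel)"
    unfolding borel_prod[symmetric] by measurable
  from borel_measurable_continuous_on[OF assms this] show ?thesis by simp
qed

lemma cont_Fn: "continuous_on UNIV (\<lambda>p::real \<times> (real^3). Fn \<alpha> l a n \<omega> (fst p) (snd p))"
  unfolding Fn_def ofreal_smult
  by (intro continuous_intros continuous_on_compose2[OF cont_cvec]) auto

lemma ind01: "indicator A x = (0::real) \<or> indicator A x = (1::real)"
  by (simp add: indicator_def)

lemma epowr_ind: "e > 0 \<Longrightarrow> epowr J e * indicator A x = epowr (J * indicator A x) e"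
  by (cases "x \<in> A") auto

lemma main_bound:
  fixes \<alpha> s p q T c r :: real and M :: "'w measure" and l :: "int^3 \<Rightarrow> 'w \<Rightarrow> real"
    and a :: "int^3 \<Rightarrow> complex^3" and A :: real
  assumes \<alpha>: "\<alpha> > 0" and c: "c > 0" and T: "T > 0"
    and p: "2 \<le> p" and pq: "p \<le> q" and qr: "q \<le> r"
    and s: "s \<ge> - 2 * \<alpha> / q"
    and P: "prob_space M" and meas: "\<And>k. l k \<in> borel_measurable M"
    and ind: "prob_space.indep_vars M (\<lambda>_. borel) l UNIV"
    and sg: "\<And>k \<gamma>. (\<integral>\<^sup>+\<omega>. ennreal (exp (\<gamma> * l k \<omega>)) \<partial>M) \<le> ennreal (exp (c * \<gamma>^2))"
    and sm: "(\<lambda>k. (1 + knorm2 k) powr s * (norm (a k))^2) summable_on UNIV"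
    and A: "A = (\<Sum>\<^sub>\<infinity>k. (1 + knorm2 k) powr s * (norm (a k))^2)" and Apos: "A > 0"
  shows "mixed_norm M r q p T (free_evol \<alpha> l a)
    \<le> ennreal (((2 * pi)^3) powr (1/p) * (T + 2 powr \<alpha> + T) powr (1/q) * (12 * exp (36 * c)) * sqrt r * sqrt A)"
proof -
  interpret PS: pair_sigma_finite M lborel
    unfolding pair_sigma_finite_def using prob_space_imp_sigma_finite[OF P] sigma_finite_lborel by simp
  have q2: "q \<ge> 2" and r2: "r \<ge> 2" and ppos: "p > 0" and qpos: "q > 0" and rpos: "r > 0"
    using p pq qr by auto
  define F where "F = free_evol \<alpha> l a"
  define \<Phi> where "\<Phi> \<omega> t x = liminf (\<lambda>n. ennreal (norm (Fn \<alpha> l a n \<omega> t x) powr r))" for \<omega> t x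
  define V :: real where "V = (2 * pi)^3"
  have Vpos: "V > 0" by (simp add: V_def)
  define P0 where "P0 = p / r"
  define Q0 where "Q0 = q / r"
  have P0: "0 < P0" "P0 \<le> 1" using ppos pq qr by (auto simp: P0_def)
  have Q0: "0 < Q0" "Q0 \<le> 1" using qpos qr by (auto simp: Q0_def)
  define Jx where "Jx \<omega> t = (\<integral>\<^sup>+x. \<Phi> \<omega> t x * indicator torus x \<partial>lborel)" for \<omega> t
  define S where "S t = Sfun \<alpha> a t" for t
  define ut where "ut t = enn2real (epowr (S t) (q/2)) + A powr (q/2)" for t
  have utpos: "ut t > 0" for t using Apos by (simp add: ut_def add_nonneg_pos)
  define Kc where "Kc = 12 * exp (36 * c)"
  define Kr where "Kr = (Kc * sqrt r) powr r"
  define C0 where "C0 = T + 2 powr \<alpha>"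
  have C0pos: "C0 > 0" using T by (simp add: C0_def add_pos_nonneg)
  define Ind where "Ind t = (indicator {0<..<T} t :: real)" for t

  have M1: "(\<lambda>p. \<Phi> \<omega> (fst p) (snd p)) \<in> borel_measurable (lborel \<Otimes>\<^sub>M lborel)" for \<omega>
  proof -
    have [measurable]: "(\<lambda>p. Fn \<alpha> l a n \<omega> (fst p) (snd p)) \<in> borel_measurable (lborel \<Otimes>\<^sub>M lborel)" for n
      by (rule cont_meas_pair[OF cont_Fn])
    show ?thesis unfolding \<Phi>_def by measurable
  qed
  have M3: "(\<lambda>t. Jx \<omega> t) \<in> borel_measurable lborel" for \<omega>
  proof -
    have "(\<lambda>(t, x). \<Phi> \<omega> t x * indicator torus x) \<in> borel_measurable (lborel \<Otimes>\<^sub>M lborel)"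
      using M1[of \<omega>] by (simp add: split_beta')
    then show ?thesis unfolding Jx_def
      by (rule lborel.borel_measurable_nn_integral)
  qed
  have M2: "(\<lambda>x. \<Phi> \<omega> t x) \<in> borel_measurable lborel" for \<omega> t
  proof -
    have "(\<lambda>x. (t, x)) \<in> measurable lborel (lborel \<Otimes>\<^sub>M lborel)" by measurable
    from measurable_compose[OF this M1[of \<omega>]] show ?thesis by simp
  qed
  have M4: "(\<lambda>z. \<Phi> (fst (fst z)) (snd (fst z)) (snd z)) \<in> borel_measurable ((M \<Otimes>\<^sub>M lborel) \<Otimes>\<^sub>M lborel)"
  proof -
    note meas_Fn[OF meas, measurable]
    show ?thesis unfolding \<Phi>_def by measurable
  qed
  have M5J: "(\<lambda>z. Jx (fst z) (snd z)) \<in> borel_measurable (M \<Otimes>\<^sub>M lborel)"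
  proof -
    have "(\<lambda>(z, x). \<Phi> (fst z) (snd z) x * indicator torus x) \<in> borel_measurable ((M \<Otimes>\<^sub>M lborel) \<Otimes>\<^sub>M lborel)"
      using M4 by (simp add: split_beta')
    then show ?thesis unfolding Jx_def
      by (rule lborel.borel_measurable_nn_integral)
  qed
  have M6: "(\<lambda>(\<omega>, x). \<Phi> \<omega> t x * indicator torus x) \<in> borel_measurable (M \<Otimes>\<^sub>M lborel)" for t
  proof -
    have "(\<lambda>(\<omega>, x). ((\<omega>, t), x)) \<in> measurable (M \<Otimes>\<^sub>M lborel) ((M \<Otimes>\<^sub>M lborel) \<Otimes>\<^sub>M lborel)"
      by measurable
    from measurable_compose[OF this M4] show ?thesis by (simp add: split_beta')
  qed
  have Mut[measurable]: "ut \<in> borel_measurable lborel"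
    unfolding ut_def S_def by measurable

  have tsb: "(\<integral>\<^sup>+t. epowr (S t) (q/2) * indicator {0<..<T} t \<partial>lborel) \<le> ennreal (C0 * A powr (q/2))"
    unfolding S_def C0_def using time_sum_bound[OF \<alpha> q2 T s sm A Apos] by simp
  define Uu where "Uu = (\<integral>\<^sup>+t. ennreal (ut t) * indicator {0<..<T} t \<partial>lborel)"
  have Tmeas: "(\<integral>\<^sup>+t. ennreal (A powr (q/2)) * indicator {0<..<T} t \<partial>lborel) = ennreal (A powr (q/2) * T)"
    using T by (simp add: nn_integral_cmult ennreal_mult)
  have Uu_le: "Uu \<le> ennreal ((C0 + T) * A powr (q/2))"
  proof -
    have "Uu \<le> (\<integral>\<^sup>+t. epowr (S t) (q/2) * indicator {0<..<T} t + ennreal (A powr (q/2)) * indicator {0<..<T} t \<partial>lborel)"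
      unfolding Uu_def
    proof (intro nn_integral_mono)
      fix t
      have "ennreal (ut t) = ennreal (enn2real (epowr (S t) (q/2))) + ennreal (A powr (q/2))"
        unfolding ut_def by (rule ennreal_plus) auto
      also have "\<dots> \<le> epowr (S t) (q/2) + ennreal (A powr (q/2))"
        by (intro add_mono) (auto simp: ennreal_enn2real_if)
      finally show "ennreal (ut t) * indicator {0<..<T} t \<le> epowr (S t) (q/2) * indicator {0<..<T} t + ennreal (A powr (q/2)) * indicator {0<..<T} t"
        by (auto split: split_indicator)
    qed
    also have "\<dots> = (\<integral>\<^sup>+t. epowr (S t) (q/2) * indicator {0<..<T} t \<partial>lborel) + ennreal (A powr (q/2) * T)"
      by (subst nn_integral_add) (auto simp: S_def Tmeas)
    also have "\<dots> \<le> ennreal (C0 * A powr (q/2)) + ennreal (A powr (q/2) * T)"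
      by (intro add_mono tsb) simp
    also have "\<dots> = ennreal ((C0 + T) * A powr (q/2))"
      using C0pos T by (simp add: ennreal_plus[symmetric] algebra_simps del: ennreal_plus)
    finally show ?thesis .
  qed
  have Uu_ge: "ennreal (A powr (q/2) * T) \<le> Uu"
    unfolding Uu_def Tmeas[symmetric]
    by (intro nn_integral_mono mult_right_mono ennreal_leI) (auto simp: ut_def)
  define Ur where "Ur = enn2real Uu"
  have UuUr: "Uu = ennreal Ur"
    using Uu_le unfolding Ur_def by (cases Uu) (auto simp: top_unique)
  have Urpos: "Ur > 0"
  proof -
    have "ennreal (A powr (q/2) * T) \<le> ennreal Ur" using Uu_ge UuUr by simp
    moreover have "A powr (q/2) * T > 0" using Apos T by simp
    ultimately show ?thesis
      by (metis ennreal_le_iff2 ennreal_less_zero_iff not_less order_less_le_trans)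
  qed
  have Ur_le: "Ur \<le> (C0 + T) * A powr (q/2)"
    using Uu_le UuUr C0pos T Urpos by (auto simp: ennreal_le_iff2)
  have AEfin: "AE t in lborel. t \<in> {0<..<T} \<longrightarrow> S t \<noteq> \<infinity>"
  proof -
    have "AE t in lborel. epowr (S t) (q/2) * indicator {0<..<T} t \<noteq> \<infinity>"
      by (rule nn_integral_noteq_infinite) (use tsb in \<open>auto simp: S_def top_unique\<close>)
    then show ?thesis
      by eventually_elim (use qpos in \<open>auto simp: epowr_eq_top_iff split: split_indicator\<close>)
  qed

  have step1: "(\<integral>\<^sup>+x. ennreal (norm (F \<omega> t x) powr p) * indicator torus x \<partial>lborel)
      \<le> ennreal (V powr (1 - P0)) * epowr (Jx \<omega> t) P0" for \<omega> t
  proof -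
    have "(\<integral>\<^sup>+x. ennreal (norm (F \<omega> t x) powr p) * indicator torus x \<partial>lborel)
        \<le> (\<integral>\<^sup>+x. epowr (\<Phi> \<omega> t x * indicator torus x) P0 \<partial>lborel)"
    proof (intro nn_integral_mono)
      fix x
      have "ennreal (norm (F \<omega> t x) powr p) = epowr (ennreal (norm (F \<omega> t x) powr r)) P0"
        using rpos by (simp add: epowr_ennreal powr_powr P0_def)
      also have "\<dots> \<le> epowr (\<Phi> \<omega> t x) P0"
        unfolding \<Phi>_def F_def by (intro epowr_mono free_evol_le_liminf rpos P0(1))
      finally have "ennreal (norm (F \<omega> t x) powr p) * indicator torus x \<le> epowr (\<Phi> \<omega> t x) P0 * indicator torus x"
        by (rule mult_right_mono) simp
      then show "ennreal (norm (F \<omega> t x) powr p) * indicator torus x \<le> epowr (\<Phi> \<omega> t x * indicator torus x) P0"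
        using P0 by (simp add: epowr_ind)
    qed
    also have "\<dots> \<le> ennreal (V powr (1 - P0)) * epowr (\<integral>\<^sup>+x. ennreal (indicator torus x powr (1 - 1/P0)) * (\<Phi> \<omega> t x * indicator torus x) \<partial>lborel) P0"
    proof (rule weighted_jensen[OF _ _ _ _ torus_indicator_integral[folded V_def] Vpos P0])
      show "(\<lambda>x. \<Phi> \<omega> t x * indicator torus x) \<in> borel_measurable lborel"
        using M2[of \<omega> t] by measurable
    qed (auto simp: indicator_def)
    also have "(\<integral>\<^sup>+x. ennreal (indicator torus x powr (1 - 1/P0)) * (\<Phi> \<omega> t x * indicator torus x) \<partial>lborel) = Jx \<omega> t"
      unfolding Jx_def by (intro nn_integral_cong) (auto split: split_indicator)
    finally show ?thesis .
  qed
  define c1 where "c1 = V powr ((1 - P0) * (q/p))"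
  have step2: "epowr (\<integral>\<^sup>+x. ennreal (norm (F \<omega> t x) powr p) * indicator torus x \<partial>lborel) (q/p)
      \<le> ennreal c1 * epowr (Jx \<omega> t) Q0" for \<omega> t
  proof -
    have qp: "q / p > 0" using ppos qpos by simp
    have "epowr (\<integral>\<^sup>+x. ennreal (norm (F \<omega> t x) powr p) * indicator torus x \<partial>lborel) (q/p)
        \<le> epowr (ennreal (V powr (1 - P0)) * epowr (Jx \<omega> t) P0) (q/p)"
      by (rule epowr_mono[OF step1 qp])
    also have "\<dots> = ennreal c1 * epowr (Jx \<omega> t) Q0"
      using qp P0 ppos rpos Vpos
      by (simp add: epowr_mult epowr_epowr epowr_ennreal powr_powr c1_def P0_def Q0_def)
    finally show ?thesis .
  qed
  define I2 where "I2 \<omega> = (\<integral>\<^sup>+t. epowr (\<integral>\<^sup>+x. ennreal (norm (F \<omega> t x) powr p) * indicator torus x \<partial>lborel) (q/p) * indicator {0<..<T} t \<partial>lborel)" for \<omega>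
  define G where "G \<omega> t = ennreal ((Ind t * ut t) powr (1 - 1/Q0)) * (Jx \<omega> t * indicator {0<..<T} t)" for \<omega> t
  have uInd: "(\<integral>\<^sup>+t. ennreal (Ind t * ut t) \<partial>lborel) = ennreal Ur"
    unfolding UuUr[symmetric] Uu_def Ind_def
    by (intro nn_integral_cong) (auto split: split_indicator)
  have step3: "I2 \<omega> \<le> ennreal c1 * (ennreal (Ur powr (1 - Q0)) * epowr (\<integral>\<^sup>+t. G \<omega> t \<partial>lborel) Q0)" for \<omega>
  proof -
    have "I2 \<omega> \<le> (\<integral>\<^sup>+t. ennreal c1 * epowr (Jx \<omega> t * indicator {0<..<T} t) Q0 \<partial>lborel)"
      unfolding I2_def
    proof (intro nn_integral_mono)
      fix t
      have "epowr (\<integral>\<^sup>+x. ennreal (norm (F \<omega> t x) powr p) * indicator torus x \<partial>lborel) (q/p) * indicator {0<..<T} t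
          \<le> ennreal c1 * epowr (Jx \<omega> t) Q0 * indicator {0<..<T} t"
        by (rule mult_right_mono[OF step2]) simp
      then show "epowr (\<integral>\<^sup>+x. ennreal (norm (F \<omega> t x) powr p) * indicator torus x \<partial>lborel) (q/p) * indicator {0<..<T} t
          \<le> ennreal c1 * epowr (Jx \<omega> t * indicator {0<..<T} t) Q0"
        using Q0 by (simp add: epowr_ind[symmetric] mult.assoc)
    qed
    also have "\<dots> = ennreal c1 * (\<integral>\<^sup>+t. epowr (Jx \<omega> t * indicator {0<..<T} t) Q0 \<partial>lborel)"
      by (rule nn_integral_cmult) (use M3[of \<omega>] in measurable)
    also have "\<dots> \<le> ennreal c1 * (ennreal (Ur powr (1 - Q0)) * epowr (\<integral>\<^sup>+t. G \<omega> t \<partial>lborel) Q0)"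
    proof (intro mult_left_mono)
      show "(\<integral>\<^sup>+t. epowr (Jx \<omega> t * indicator {0<..<T} t) Q0 \<partial>lborel) \<le> ennreal (Ur powr (1 - Q0)) * epowr (\<integral>\<^sup>+t. G \<omega> t \<partial>lborel) Q0"
        unfolding G_def
      proof (rule weighted_jensen[OF _ _ _ _ uInd Urpos Q0])
        show "(\<lambda>t. Ind t * ut t) \<in> borel_measurable lborel" unfolding Ind_def by measurable
        show "(\<lambda>t. Jx \<omega> t * indicator {0<..<T} t) \<in> borel_measurable lborel" using M3[of \<omega>] by measurable
        show "0 \<le> Ind t * ut t" for t using utpos[of t] by (simp add: Ind_def)
        show "Ind t * ut t = 0 \<Longrightarrow> Jx \<omega> t * indicator {0<..<T} t = 0" for t
          using utpos[of t] by (auto simp: Ind_def split: split_indicator)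
      qed
    qed simp
    finally show ?thesis .
  qed
  define c2 where "c2 = c1 powr (r/q) * Ur powr ((1 - Q0) * (r/q))"
  have step4: "epowr (I2 \<omega>) (r/q) \<le> ennreal c2 * (\<integral>\<^sup>+t. G \<omega> t \<partial>lborel)" for \<omega>
  proof -
    have rq: "r / q > 0" using rpos qpos by simp
    have "epowr (I2 \<omega>) (r/q) \<le> epowr (ennreal c1 * (ennreal (Ur powr (1 - Q0)) * epowr (\<integral>\<^sup>+t. G \<omega> t \<partial>lborel) Q0)) (r/q)"
      by (rule epowr_mono[OF step3 rq])
    also have "\<dots> = ennreal c2 * (\<integral>\<^sup>+t. G \<omega> t \<partial>lborel)"
      using rq Q0 qpos rpos Vpos Urpos
      by (simp add: epowr_mult epowr_epowr epowr_ennreal powr_powr c1_def c2_def Q0_def ennreal_mult mult.assoc)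
    finally show ?thesis .
  qed

  define W where "W t = (Ind t * ut t) powr (1 - 1/Q0)" for t
  have MW[measurable]: "W \<in> borel_measurable lborel" unfolding W_def Ind_def by measurable
  have MG: "(\<lambda>(\<omega>, t). G \<omega> t) \<in> borel_measurable (M \<Otimes>\<^sub>M lborel)"
  proof -
    note M5J[measurable]
    show ?thesis unfolding G_def W_def[symmetric] split_beta' by measurable
  qed
  have MJo: "(\<lambda>\<omega>. Jx \<omega> t) \<in> borel_measurable M" for t
  proof -
    have "(\<lambda>\<omega>. (\<omega>, t)) \<in> measurable M (M \<Otimes>\<^sub>M lborel)" by measurable
    from measurable_compose[OF this M5J] show ?thesis by simp
  qed
  have step6: "(\<integral>\<^sup>+\<omega>. Jx \<omega> t \<partial>M) \<le> ennreal V * (ennreal Kr * epowr (S t) (r/2))" for t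
  proof -
    have "(\<integral>\<^sup>+\<omega>. Jx \<omega> t \<partial>M) = (\<integral>\<^sup>+x. (\<integral>\<^sup>+\<omega>. \<Phi> \<omega> t x * indicator torus x \<partial>M) \<partial>lborel)"
      unfolding Jx_def by (rule PS.Fubini'[symmetric]) (rule M6)
    also have "\<dots> = (\<integral>\<^sup>+x. (\<integral>\<^sup>+\<omega>. \<Phi> \<omega> t x \<partial>M) * indicator torus x \<partial>lborel)"
    proof (intro nn_integral_cong nn_integral_multc)
      fix x
      note meas_Fn_omega[OF meas, measurable]
      show "(\<lambda>\<omega>. \<Phi> \<omega> t x) \<in> borel_measurable M" unfolding \<Phi>_def by measurable
    qed
    also have "\<dots> \<le> (\<integral>\<^sup>+x. (ennreal Kr * epowr (S t) (r/2)) * indicator torus x \<partial>lborel)"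
    proof (intro nn_integral_mono mult_right_mono)
      fix x
      show "(\<integral>\<^sup>+\<omega>. \<Phi> \<omega> t x \<partial>M) \<le> ennreal Kr * epowr (S t) (r/2)"
        unfolding \<Phi>_def Kr_def Kc_def S_def
        by (rule E_bound[OF P meas ind sg c]) (use r2 in simp)
    qed simp
    also have "\<dots> = (ennreal Kr * epowr (S t) (r/2)) * ennreal V"
      using torus_indicator_integral by (simp add: nn_integral_cmult V_def ennreal_indicator)
    finally show ?thesis by (simp add: mult_ac)
  qed
  have step5: "(\<integral>\<^sup>+\<omega>. (\<integral>\<^sup>+t. G \<omega> t \<partial>lborel) \<partial>M) \<le> ennreal (V * Kr) * ennreal Ur"
  proof -
    have "(\<integral>\<^sup>+\<omega>. (\<integral>\<^sup>+t. G \<omega> t \<partial>lborel) \<partial>M) = (\<integral>\<^sup>+t. (\<integral>\<^sup>+\<omega>. G \<omega> t \<partial>M) \<partial>lborel)"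
      by (rule PS.Fubini'[symmetric]) (rule MG)
    also have "\<dots> = (\<integral>\<^sup>+t. ennreal (W t) * indicator {0<..<T} t * (\<integral>\<^sup>+\<omega>. Jx \<omega> t \<partial>M) \<partial>lborel)"
    proof (intro nn_integral_cong)
      fix t
      have "(\<integral>\<^sup>+\<omega>. G \<omega> t \<partial>M) = (\<integral>\<^sup>+\<omega>. (ennreal (W t) * indicator {0<..<T} t) * Jx \<omega> t \<partial>M)"
        unfolding G_def W_def by (simp add: mult_ac)
      also have "\<dots> = ennreal (W t) * indicator {0<..<T} t * (\<integral>\<^sup>+\<omega>. Jx \<omega> t \<partial>M)"
        by (rule nn_integral_cmult) (rule MJo)
      finally show "(\<integral>\<^sup>+\<omega>. G \<omega> t \<partial>M) = \<dots>" .
    qed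
    also have "\<dots> \<le> (\<integral>\<^sup>+t. ennreal (W t) * indicator {0<..<T} t * (ennreal V * (ennreal Kr * epowr (S t) (r/2))) \<partial>lborel)"
      by (intro nn_integral_mono mult_left_mono step6) simp
    also have "\<dots> \<le> (\<integral>\<^sup>+t. ennreal (V * Kr) * (ennreal (ut t) * indicator {0<..<T} t) \<partial>lborel)"
    proof (rule nn_integral_mono_AE)
      show "AE t in lborel. ennreal (W t) * indicator {0<..<T} t * (ennreal V * (ennreal Kr * epowr (S t) (r/2)))
          \<le> ennreal (V * Kr) * (ennreal (ut t) * indicator {0<..<T} t)"
        using AEfin
      proof eventually_elim
        case (elim t)
        show ?case
        proof (cases "t \<in> {0<..<T}")
          case False then show ?thesis by simp
        next
          case True
          then obtain st where st: "S t = ennreal st" "st \<ge> 0" using elim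
            by (cases "S t") auto
          have utge: "st powr (q/2) \<le> ut t"
            using st Apos by (simp add: ut_def epowr_ennreal)
          have sr: "st powr (r/2) \<le> ut t powr (r/q)"
          proof -
            have "st powr (r/2) = (st powr (q/2)) powr (r/q)"
              using qpos by (simp add: powr_powr)
            also have "\<dots> \<le> ut t powr (r/q)"
              by (rule powr_mono2) (use utge qpos rpos in auto)
            finally show ?thesis .
          qed
          have WI: "W t = ut t powr (1 - r/q)"
            using True by (simp add: W_def Ind_def Q0_def)
          have "W t * st powr (r/2) \<le> ut t powr (1 - r/q) * ut t powr (r/q)"
            unfolding WI by (rule mult_left_mono[OF sr]) simp
          also have "\<dots> = ut t"
            using utpos[of t] by (simp add: powr_add[symmetric])
          finally have key: "W t * st powr (r/2) \<le> ut t" .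
          have Wnn: "W t \<ge> 0" by (simp add: W_def)
          have Kr0: "Kr \<ge> 0" by (simp add: Kr_def)
          have "ennreal (W t) * indicator {0<..<T} t * (ennreal V * (ennreal Kr * epowr (S t) (r/2)))
              = ennreal ((V * Kr) * (W t * st powr (r/2)))"
            using True st Vpos Wnn Kr0 rpos by (simp add: epowr_ennreal ennreal_mult mult_ac)
          also have "\<dots> \<le> ennreal ((V * Kr) * ut t)"
            using key Vpos Kr0 by (intro ennreal_leI mult_left_mono) auto
          also have "\<dots> = ennreal (V * Kr) * (ennreal (ut t) * indicator {0<..<T} t)"
            using True Vpos Kr0 utpos[of t] by (simp add: ennreal_mult)
          finally show ?thesis .
        qed
      qed
    qed
    also have "\<dots> = ennreal (V * Kr) * Uu"
      unfolding Uu_def by (rule nn_integral_cmult) measurable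
    finally show ?thesis by (simp add: UuUr)
  qed

  have MGi: "(\<lambda>\<omega>. \<integral>\<^sup>+t. G \<omega> t \<partial>lborel) \<in> borel_measurable M"
    using lborel.borel_measurable_nn_integral[OF MG] by simp
  have Kr0: "Kr > 0" using rpos by (simp add: Kr_def Kc_def)
  define X where "X = c2 * (V * Kr) * Ur"
  have c2pos: "c2 > 0" using Vpos Urpos by (simp add: c2_def c1_def)
  have X0: "X > 0" using c2pos Vpos Kr0 Urpos by (simp add: X_def)
  have int_le: "(\<integral>\<^sup>+\<omega>. epowr (I2 \<omega>) (r/q) \<partial>M) \<le> ennreal X"
  proof -
    have "(\<integral>\<^sup>+\<omega>. epowr (I2 \<omega>) (r/q) \<partial>M) \<le> (\<integral>\<^sup>+\<omega>. ennreal c2 * (\<integral>\<^sup>+t. G \<omega> t \<partial>lborel) \<partial>M)"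
      by (intro nn_integral_mono step4)
    also have "\<dots> = ennreal c2 * (\<integral>\<^sup>+\<omega>. (\<integral>\<^sup>+t. G \<omega> t \<partial>lborel) \<partial>M)"
      by (rule nn_integral_cmult[OF MGi])
    also have "\<dots> \<le> ennreal c2 * (ennreal (V * Kr) * ennreal Ur)"
      by (intro mult_left_mono step5) simp
    also have "\<dots> = ennreal X"
      using c2pos Vpos Kr0 Urpos by (simp add: X_def ennreal_mult mult.assoc)
    finally show ?thesis .
  qed
  have mn: "mixed_norm M r q p T (free_evol \<alpha> l a) = epowr (\<integral>\<^sup>+\<omega>. epowr (I2 \<omega>) (r/q) \<partial>M) (1/r)"
    unfolding mixed_norm_def I2_def F_def ..
  have "mixed_norm M r q p T (free_evol \<alpha> l a) \<le> ennreal (X powr (1/r))"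
    unfolding mn using epowr_mono[OF int_le, of "1/r"] rpos X0 by (simp add: epowr_ennreal)
  also have "X powr (1/r) = V powr (1/p) * Ur powr (1/q) * (Kc * sqrt r)"
  proof -
    have e1: "(1 - P0) * (q / p) * (r / q) = r/p - 1" using ppos qpos rpos by (simp add: P0_def field_simps)
    have e2: "(1 - Q0) * (r / q) = r/q - 1" using qpos rpos by (simp add: Q0_def field_simps)
    have "c1 powr (r/q) = V powr (r/p - 1)"
      unfolding c1_def powr_powr e1 ..
    moreover have "Ur powr ((1 - Q0) * (r/q)) = Ur powr (r/q - 1)"
      unfolding e2 ..
    ultimately have "c2 = V powr (r/p - 1) * Ur powr (r/q - 1)"
      unfolding c2_def by simp
    then have "X = (V powr (r/p - 1) * V) * (Ur powr (r/q - 1) * Ur) * Kr"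
      by (simp add: X_def mult_ac)
    also have "V powr (r/p - 1) * V = V powr (r/p)"
      using Vpos powr_add[of V "r/p - 1" 1] by simp
    also have "Ur powr (r/q - 1) * Ur = Ur powr (r/q)"
      using Urpos powr_add[of Ur "r/q - 1" 1] by simp
    finally have "X = V powr (r/p) * Ur powr (r/q) * Kr" .
    then have "X powr (1/r) = (V powr (r/p)) powr (1/r) * (Ur powr (r/q)) powr (1/r) * Kr powr (1/r)"
      by (simp add: powr_mult)
    also have "\<dots> = V powr (1/p) * Ur powr (1/q) * (Kc * sqrt r)"
      using rpos Kr0 by (simp add: powr_powr Kr_def Kc_def)
    finally show ?thesis .
  qed
  also have "\<dots> \<le> V powr (1/p) * ((C0 + T) * A powr (q/2)) powr (1/q) * (Kc * sqrt r)"
    using Ur_le Urpos qpos Vpos rpos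
    by (intro mult_right_mono mult_left_mono powr_mono2) (auto simp: Kc_def)
  also have "((C0 + T) * A powr (q/2)) powr (1/q) = (C0 + T) powr (1/q) * sqrt A"
    using C0pos T Apos qpos by (simp add: powr_mult powr_powr powr_half_sqrt)
  finally show ?thesis
    by (simp add: V_def C0_def Kc_def mult_ac ennreal_leI)
qed

theorem lemma3p4:
  fixes \<alpha> s p q T c :: real
  assumes "\<alpha> > 0" and "c > 0" and "T > 0"
    and "2 \<le> p" and "p \<le> q"
    and "s \<ge> - 2 * \<alpha> / q + 1/2 - 1/p"
  shows "\<exists>C::real. C > 0 \<and>
    (\<forall>(M::'w measure) (l :: int^3 \<Rightarrow> 'w \<Rightarrow> real) (a :: int^3 \<Rightarrow> complex^3) (r::real).
       prob_space M
       \<longrightarrow> (\<forall>k. l k \<in> borel_measurable M)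
       \<longrightarrow> prob_space.indep_vars M (\<lambda>_. borel) l UNIV
       \<longrightarrow> (\<forall>k. integral\<^sup>L M (l k) = 0)
       \<longrightarrow> (\<forall>k \<gamma>. (\<integral>\<^sup>+\<omega>. ennreal (exp (\<gamma> * l k \<omega>)) \<partial>M) \<le> ennreal (exp (c * \<gamma>^2)))
       \<longrightarrow> q \<le> r
       \<longrightarrow> in_Hs s a
       \<longrightarrow> mixed_norm M r q p T (free_evol \<alpha> l a) \<le> ennreal (C * sqrt r * Hs_norm s a))"
proof -
  note as = assms
  define C where "C = ((2 * pi)^3) powr (1/p) * (T + 2 powr \<alpha> + T) powr (1/q) * (12 * exp (36 * c))"
  have "T + 2 powr \<alpha> + T > 0" using as(3) by (simp add: add_pos_nonneg add_pos_pos)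
  then have Cpos: "C > 0" by (simp add: C_def)
  have s': "s \<ge> - 2 * \<alpha> / q"
  proof -
    have "1/p \<le> 1/2" using as(4) by (simp add: field_simps)
    then show ?thesis using as(6) by linarith
  qed
  show ?thesis
  proof (intro exI[of _ C] conjI Cpos allI impI)
    fix M :: "'w measure" and l :: "int^3 \<Rightarrow> 'w \<Rightarrow> real" and a :: "int^3 \<Rightarrow> complex^3" and r :: real
    assume P: "prob_space M" and meas: "\<forall>k. l k \<in> borel_measurable M"
      and ind: "prob_space.indep_vars M (\<lambda>_. borel) l UNIV"
      and mean: "\<forall>k. integral\<^sup>L M (l k) = 0"
      and sg: "\<forall>k \<gamma>. (\<integral>\<^sup>+\<omega>. ennreal (exp (\<gamma> * l k \<omega>)) \<partial>M) \<le> ennreal (exp (c * \<gamma>^2))"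
      and qr: "q \<le> r" and hs: "in_Hs s a"
    define f where "f = (\<lambda>k. (1 + knorm2 k) powr s * (norm (a k))^2)"
    have fnn: "f k \<ge> 0" for k by (simp add: f_def)
    have sm: "f summable_on UNIV" using hs by (simp add: in_Hs_def f_def)
    define A where "A = infsum f UNIV"
    have A0: "A \<ge> 0" unfolding A_def by (rule infsum_nonneg) (simp add: fnn)
    have HA: "Hs_norm s a = sqrt A" by (simp add: Hs_norm_def A_def f_def)
    show "mixed_norm M r q p T (free_evol \<alpha> l a) \<le> ennreal (C * sqrt r * Hs_norm s a)"
    proof (cases "A = 0")
      case True
      have "f k = 0" for k
        using nonneg_infsum_le_0D[of f UNIV k] True sm fnn by (simp add: A_def)
      then have a0: "a k = 0" for k
        using knorm2_nonneg[of k] by (simp add: f_def) (metis add_nonneg_eq_0_iff zero_le_one one_neq_zero knorm2_nonneg)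
      have "free_evol \<alpha> l a \<omega> t x = 0" for \<omega> t x
        by (simp add: free_evol_def a0)
      then have "mixed_norm M r q p T (free_evol \<alpha> l a) = 0"
        using as(4) by (simp add: mixed_norm_def)
      then show ?thesis by simp
    next
      case False
      then have Apos: "A > 0" using A0 by simp
      have "mixed_norm M r q p T (free_evol \<alpha> l a)
          \<le> ennreal (((2 * pi)^3) powr (1/p) * (T + 2 powr \<alpha> + T) powr (1/q) * (12 * exp (36 * c)) * sqrt r * sqrt A)"
        by (rule main_bound[OF as(1,2,3,4,5) qr s' P _ ind _ sm[unfolded f_def] A_def[unfolded f_def] Apos])
           (use meas sg in auto)
      then show ?thesis by (simp add: HA C_def)
    qed
  qed
qed


end
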